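(* Let $g(n,k)$ be the number of $k$-faces of $I(\mathfrak{gl}_n,V\oplus\bigwedge^2)$. Then for $n,k\ge 0$ \[ g(n,k)=\sum_{i=0}^k(-1)^{k-i}2^i\binom{k}{i}\binom{n+i}{2k}, \] and for $0\le k\le n$ \[ g(n,n-k)=\sum_{i=0}^{\min\{k,\lfloor (n+1)/2\rfloor\}}(-1)^i2^{n-2i}\binom{n-i}{k-i}\left(\binom{n-i+1}{i}+\binom{n-i}{i-1}\right), \] with the convention $\binom{a}{b}=0$ if $b<0$ or $b>a$.
   Context: Identify the diagonal Cartan subalgebra of $\mathfrak{gl}_n$ with $\mathbb{R}^n$ with coordinates $x_1,\dots,x_n$. Let $W=\{x_1\ge\cdots\ge x_n\}$ and $W^0=\{x_1>\cdots>x_n\}$. For $1\le i\le j\le n$ let $\lambda_{i,j}^\perp$ be the hyperplane $x_i+x_j=0$ (for $i=j$: $x_i=0$). The arrangement $I(\mathfrak{gl}_n,V\oplus\bigwedge^2)$ consists of these hyperplanes restricted to $W$. Its chambers are the closures of the connected components of $W^0\setminus\bigcup\lambda_{i,j}^\perp$; a face is a chamber or the intersection of a chamber with a supporting hyperplane; a $k$-face is a face whose linear span has dimension $k$. *)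

theory Defs
  imports "HOL-Analysis.Analysis" "HOL-Library.Function_Algebras"
begin

text \<open>Points of R^n are modelled as functions nat => real vanishing outside {0..<n};
  coordinate x_(i+1) of the paper is x i here. nat => real carries the product
  topology (which on this closed subspace is the Euclidean topology) and the
  pointwise vector-space structure.\<close>

definition Rn :: "nat \<Rightarrow> (nat \<Rightarrow> real) set" where
  "Rn n = {x. \<forall>i\<ge>n. x i = 0}"

definition scaleF :: "real \<Rightarrow> (nat \<Rightarrow> real) \<Rightarrow> (nat \<Rightarrow> real)" where
  "scaleF c x = (\<lambda>i. c * x i)"

definition Wc :: "nat \<Rightarrow> (nat \<Rightarrow> real) set" where
  "Wc n = {x \<in> Rn n. \<forall>i j. i \<le> j \<and> j < n \<longrightarrow> x j \<le> x i}"

definition W0 :: "nat \<Rightarrow> (nat \<Rightarrow> real) set" where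
  "W0 n = {x \<in> Rn n. \<forall>i j. i < j \<and> j < n \<longrightarrow> x j < x i}"

definition lam_perp :: "nat \<Rightarrow> nat \<Rightarrow> nat \<Rightarrow> (nat \<Rightarrow> real) set" where
  "lam_perp n i j = {x \<in> Rn n. (if i = j then x i = 0 else x i + x j = 0)}"

definition arr_complement :: "nat \<Rightarrow> (nat \<Rightarrow> real) set" where
  "arr_complement n = W0 n - (\<Union>{lam_perp n i j | i j. i \<le> j \<and> j < n})"

definition chambers :: "nat \<Rightarrow> (nat \<Rightarrow> real) set set" where
  "chambers n = {closure (connected_component_set (arr_complement n) x) | x. x \<in> arr_complement n}"

definition supporting_hyperplane :: "nat \<Rightarrow> (nat \<Rightarrow> real) set \<Rightarrow> (nat \<Rightarrow> real) set \<Rightarrow> bool" where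
  "supporting_hyperplane n C H \<longleftrightarrow>
     (\<exists>a b. (\<exists>i<n. a i \<noteq> 0) \<and>
        H = {x \<in> Rn n. (\<Sum>i<n. a i * x i) = b} \<and>
        C \<subseteq> {x. (\<Sum>i<n. a i * x i) \<le> b} \<and> C \<inter> H \<noteq> {})"

definition faces :: "nat \<Rightarrow> (nat \<Rightarrow> real) set set" where
  "faces n = chambers n \<union> {C \<inter> H | C H. C \<in> chambers n \<and> supporting_hyperplane n C H}"

text \<open>dimension of the linear span (vector_space.dim S is the dimension of span S)\<close>
definition span_dim :: "(nat \<Rightarrow> real) set \<Rightarrow> nat" where
  "span_dim S = vector_space.dim scaleF S"

definition g :: "nat \<Rightarrow> nat \<Rightarrow> nat" where
  "g n k = card {F \<in> faces n. span_dim F = k}"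

definition binom :: "int \<Rightarrow> int \<Rightarrow> int" where
  "binom a b = (if b < 0 \<or> b > a then 0 else int (nat a choose nat b))"

end

theory Submission
  imports Defs "HOL-Library.Multiset"
begin


lemma sum_fun_apply: "(sum f T) i = sum (\<lambda>t. f t i) T"
  by (induction T rule: infinite_finite_induct) auto

interpretation VS: vector_space scaleF
  by unfold_locales (auto simp: scaleF_def fun_eq_iff algebra_simps)

definition compat :: "real \<Rightarrow> real \<Rightarrow> bool" where
  "compat a b \<longleftrightarrow> (0 < a \<longrightarrow> 0 \<le> b) \<and> (a < 0 \<longrightarrow> b \<le> 0) \<and> (a = 0 \<longrightarrow> b = 0)"

lemma compat_neg: "compat (-a) (-b) \<longleftrightarrow> compat a b"
  unfolding compat_def by auto

lemma compat_zero[simp]: "compat a 0"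
  unfolding compat_def by auto

lemma compat_scale: "compat a b \<Longrightarrow> 0 \<le> c \<Longrightarrow> compat a (c * b)"
  unfolding compat_def by (auto simp: mult_nonneg_nonneg mult_nonneg_nonpos)

lemma compat_add: "compat a b \<Longrightarrow> compat a b' \<Longrightarrow> compat a (b + b')"
  unfolding compat_def by auto

lemma compat_sum: "(\<And>t. t \<in> T \<Longrightarrow> compat a (f t)) \<Longrightarrow> compat a (sum f T)"
  by (induction T rule: infinite_finite_induct) (auto intro: compat_add)

lemma compat_self: "compat a a"
  unfolding compat_def by auto

lemma compat_trans: "compat a b \<Longrightarrow> compat b c \<Longrightarrow> compat a c"
  unfolding compat_def by (smt (verit))

lemma compat_pos: "compat a b \<Longrightarrow> 0 < b \<Longrightarrow> 0 < a"
  unfolding compat_def by (smt (verit))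

lemma compat_neg_ex: "compat a b \<Longrightarrow> b < 0 \<Longrightarrow> a < 0"
  unfolding compat_def by (smt (verit))

definition G :: "nat \<Rightarrow> (nat \<Rightarrow> real) \<Rightarrow> (nat \<Rightarrow> real) set" where
  "G n u = {x \<in> Rn n. \<forall>i<n. \<forall>j<n. compat (u i - u j) (x i - x j) \<and> compat (u i + u j) (x i + x j)}"

lemma Rn_zero[simp]: "0 \<in> Rn n" by (simp add: Rn_def)

lemma G_zero[simp]: "0 \<in> G n u" by (simp add: G_def)

lemma G_self: "u \<in> Rn n \<Longrightarrow> u \<in> G n u"
  by (simp add: G_def compat_self)

lemma G_sum:
  assumes "\<And>t. t \<in> T \<Longrightarrow> y t \<in> G n u" "\<And>t. t \<in> T \<Longrightarrow> 0 \<le> c t"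
  shows "(\<lambda>i. \<Sum>t\<in>T. c t * y t i) \<in> G n u"
proof -
  have "(\<lambda>i. \<Sum>t\<in>T. c t * y t i) \<in> Rn n"
    using assms(1) by (auto simp: Rn_def G_def)
  moreover have "compat (u i - u j) ((\<Sum>t\<in>T. c t * y t i) - (\<Sum>t\<in>T. c t * y t j))"
    "compat (u i + u j) ((\<Sum>t\<in>T. c t * y t i) + (\<Sum>t\<in>T. c t * y t j))"
    if "i < n" "j < n" for i j
  proof -
    have "compat (u i - u j) (\<Sum>t\<in>T. c t * (y t i - y t j))"
      using assms that by (intro compat_sum compat_scale) (auto simp: G_def)
    then show "compat (u i - u j) ((\<Sum>t\<in>T. c t * y t i) - (\<Sum>t\<in>T. c t * y t j))"
      by (simp add: sum_subtractf algebra_simps)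
    have "compat (u i + u j) (\<Sum>t\<in>T. c t * (y t i + y t j))"
      using assms that by (intro compat_sum compat_scale) (auto simp: G_def)
    then show "compat (u i + u j) ((\<Sum>t\<in>T. c t * y t i) + (\<Sum>t\<in>T. c t * y t j))"
      by (simp add: sum.distrib algebra_simps)
  qed
  ultimately show ?thesis by (auto simp: G_def)
qed

lemma G_mono:
  assumes "v \<in> G n u" shows "G n v \<subseteq> G n u"
  using assms unfolding G_def compat_def by (smt (verit) mem_Collect_eq subsetI)

lemma G_Wc: "u \<in> Wc n \<Longrightarrow> G n u \<subseteq> Wc n"
proof
  fix x assume u: "u \<in> Wc n" and x: "x \<in> G n u"
  have "x j \<le> x i" if "i \<le> j" "j < n" for i j
  proof -
    have "compat (u i - u j) (x i - x j)" using x that by (auto simp: G_def)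
    moreover have "u j \<le> u i" using u that by (auto simp: Wc_def)
    ultimately show ?thesis unfolding compat_def by auto
  qed
  then show "x \<in> Wc n" using x by (auto simp: Wc_def G_def)
qed

lemma G_signed:
  assumes "x \<in> G n w" "a < n" "b < n" "ea = 1 \<or> ea = -1" "eb = 1 \<or> eb = -1"
  shows "compat (ea * w a - eb * w b) (ea * x a - eb * x b)"
proof -
  have d: "compat (w a - w b) (x a - x b)" "compat (w a + w b) (x a + x b)"
    using assms(1-3) by (auto simp: G_def)
  show ?thesis
    using assms(4,5)
  proof (elim disjE)
    assume "ea = 1" "eb = 1" then show ?thesis using d by simp
  next
    assume "ea = 1" "eb = -1" then show ?thesis using d by simp
  next
    assume "ea = -1" "eb = 1" then show ?thesis using d compat_neg[of "w a + w b" "x a + x b"] 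
      by (simp add: algebra_simps)
  next
    assume "ea = -1" "eb = -1" then show ?thesis using d compat_neg[of "w a - w b" "x a - x b"] 
      by (simp add: algebra_simps)
  qed
qed

lemma G_signed1:
  assumes "x \<in> G n w" "a < n" "ea = 1 \<or> ea = -1"
  shows "compat (ea * w a) (ea * x a)"
proof -
  have d: "compat (w a + w a) (x a + x a)"
    using assms(1-2) unfolding G_def by blast
  then have "compat (w a) (x a)" unfolding compat_def by (smt (verit))
  then show ?thesis using assms(3) compat_neg[of "w a" "x a"] by auto
qed


locale chamber =
  fixes n :: nat and u :: "nat \<Rightarrow> real"
  assumes u_Rn: "u \<in> Rn n"
    and u_nz: "\<And>i. i < n \<Longrightarrow> u i \<noteq> 0"
    and u_dist: "\<And>i j. i < n \<Longrightarrow> j < n \<Longrightarrow> i \<noteq> j \<Longrightarrow> \<bar>u i\<bar> \<noteq> \<bar>u j\<bar>"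
begin

definition eps :: "nat \<Rightarrow> real" where "eps i = sgn (u i)"
definition rk :: "nat \<Rightarrow> nat" where "rk i = card {j. j < n \<and> \<bar>u j\<bar> \<le> \<bar>u i\<bar>}"
definition rho :: "nat \<Rightarrow> nat \<Rightarrow> real" where
  "rho t = (\<lambda>i. if i < n \<and> t \<le> rk i then eps i else 0)"
definition Lv :: "nat \<Rightarrow> (nat \<Rightarrow> real) \<Rightarrow> real" where
  "Lv s x = (\<Sum>i<n. if rk i = s then eps i * x i else 0)"
definition phi :: "nat \<Rightarrow> (nat \<Rightarrow> real) \<Rightarrow> real" where
  "phi t x = Lv t x - Lv (t - 1) x"

lemma eps_cases: "i < n \<Longrightarrow> eps i = 1 \<or> eps i = -1"
  using u_nz[of i] by (auto simp: eps_def sgn_if)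

lemma eps_sq: "i < n \<Longrightarrow> eps i * eps i = 1"
  using eps_cases[of i] by auto

lemma u_eps: "u i = eps i * \<bar>u i\<bar>"
  by (simp add: eps_def sgn_mult_abs)

lemma eps_u: "eps i * u i = \<bar>u i\<bar>"
  by (simp add: eps_def abs_sgn)

lemma rk_ge1: "i < n \<Longrightarrow> 1 \<le> rk i"
proof -
  assume "i < n"
  then have "i \<in> {j. j < n \<and> \<bar>u j\<bar> \<le> \<bar>u i\<bar>}" by auto
  then show ?thesis unfolding rk_def
    by (metis (no_types, lifting) One_nat_def Suc_leI card_gt_0_iff empty_iff finite_nat_set_iff_bounded mem_Collect_eq)
qed

lemma rk_le: "rk i \<le> n"
proof -
  have "{j. j < n \<and> \<bar>u j\<bar> \<le> \<bar>u i\<bar>} \<subseteq> {..<n}" by auto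
  then show ?thesis unfolding rk_def by (metis card_lessThan card_mono finite_lessThan)
qed

lemma fin_lt: "finite {j. j < n \<and> P j}"
  by (rule finite_subset[of _ "{..<n}"]) auto

lemma rk_mono: "i < n \<Longrightarrow> j < n \<Longrightarrow> \<bar>u j\<bar> \<le> \<bar>u i\<bar> \<Longrightarrow> rk j \<le> rk i"
  unfolding rk_def by (intro card_mono fin_lt) (auto intro: order_trans)

lemma rk_strict: "i < n \<Longrightarrow> j < n \<Longrightarrow> \<bar>u j\<bar> < \<bar>u i\<bar> \<Longrightarrow> rk j < rk i"
  unfolding rk_def
proof (intro psubset_card_mono fin_lt)
  assume "i < n" "j < n" "\<bar>u j\<bar> < \<bar>u i\<bar>"
  show "{ja. ja < n \<and> \<bar>u ja\<bar> \<le> \<bar>u j\<bar>} \<subset> {j. j < n \<and> \<bar>u j\<bar> \<le> \<bar>u i\<bar>}"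
  proof (rule psubsetI)
    show "{ja. ja < n \<and> \<bar>u ja\<bar> \<le> \<bar>u j\<bar>} \<subseteq> {j. j < n \<and> \<bar>u j\<bar> \<le> \<bar>u i\<bar>}"
      using \<open>\<bar>u j\<bar> < \<bar>u i\<bar>\<close> by auto
    have "i \<in> {j. j < n \<and> \<bar>u j\<bar> \<le> \<bar>u i\<bar>}" using \<open>i < n\<close> by simp
    moreover have "i \<notin> {ja. ja < n \<and> \<bar>u ja\<bar> \<le> \<bar>u j\<bar>}" using \<open>\<bar>u j\<bar> < \<bar>u i\<bar>\<close> by simp
    ultimately show "{ja. ja < n \<and> \<bar>u ja\<bar> \<le> \<bar>u j\<bar>} \<noteq> {j. j < n \<and> \<bar>u j\<bar> \<le> \<bar>u i\<bar>}" by blast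
  qed
qed

lemma rk_le_iff: "i < n \<Longrightarrow> j < n \<Longrightarrow> rk j \<le> rk i \<longleftrightarrow> \<bar>u j\<bar> \<le> \<bar>u i\<bar>"
proof
  assume ij: "i < n" "j < n" and r: "rk j \<le> rk i"
  show "\<bar>u j\<bar> \<le> \<bar>u i\<bar>"
  proof (rule ccontr)
    assume "\<not> \<bar>u j\<bar> \<le> \<bar>u i\<bar>"
    then have "\<bar>u i\<bar> < \<bar>u j\<bar>" by simp
    from rk_strict[OF ij(2) ij(1) this] r show False by simp
  qed
qed (rule rk_mono)

lemma rk_less_iff: "i < n \<Longrightarrow> j < n \<Longrightarrow> rk j < rk i \<longleftrightarrow> \<bar>u j\<bar> < \<bar>u i\<bar>"
  using rk_le_iff[of j i] by linarith

lemma rk_eq_iff: "i < n \<Longrightarrow> j < n \<Longrightarrow> rk j = rk i \<longleftrightarrow> j = i"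
proof
  assume ij: "i < n" "j < n" and r: "rk j = rk i"
  then have "\<bar>u j\<bar> = \<bar>u i\<bar>" using rk_le_iff[OF ij] rk_le_iff[OF ij(2,1)] by simp
  then show "j = i" using u_dist[OF ij(2,1)] by auto
qed simp

lemma rk_inj: "inj_on rk {..<n}"
  using rk_eq_iff by (auto simp: inj_on_def)

lemma rk_image: "rk ` {..<n} = {1..n}"
proof -
  have "rk ` {..<n} \<subseteq> {1..n}" using rk_ge1 rk_le by auto
  moreover have "card (rk ` {..<n}) = card {1..n}"
    using card_image[OF rk_inj] by simp
  ultimately show ?thesis by (simp add: card_subset_eq)
qed

lemma rk_surj: "s \<in> {1..n} \<Longrightarrow> \<exists>i<n. rk i = s"
  using rk_image by (metis imageE lessThan_iff)

lemma Lv_rk: "i < n \<Longrightarrow> Lv (rk i) x = eps i * x i"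
proof -
  assume i: "i < n"
  have "Lv (rk i) x = (\<Sum>j<n. if j = i then eps j * x j else 0)"
    unfolding Lv_def using rk_eq_iff[OF i] by (intro sum.cong) auto
  also have "\<dots> = eps i * x i" using i by simp
  finally show ?thesis .
qed

lemma Lv_0: "Lv 0 x = 0"
  unfolding Lv_def using rk_ge1 by (intro sum.neutral) (auto dest: rk_ge1)

lemma Lv_out: "s = 0 \<or> n < s \<Longrightarrow> Lv s x = 0"
  unfolding Lv_def
proof (intro sum.neutral ballI)
  fix i assume "s = 0 \<or> n < s" "i \<in> {..<n}"
  then have "rk i \<noteq> s" using rk_ge1[of i] rk_le[of i] by auto
  then show "(if rk i = s then eps i * x i else 0) = 0" by simp
qed

lemma sum_phi: "(\<Sum>t\<in>{1..r}. phi t x) = Lv r x"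
proof (induction r)
  case 0 then show ?case by (simp add: Lv_0)
next
  case (Suc r)
  have "{1..Suc r} = insert (Suc r) {1..r}" by auto
  then show ?case using Suc by (simp add: phi_def)
qed

lemma decomp:
  assumes "x \<in> Rn n"
  shows "x = (\<lambda>i. \<Sum>t\<in>{1..n}. phi t x * rho t i)"
proof
  fix i
  show "x i = (\<Sum>t\<in>{1..n}. phi t x * rho t i)"
  proof (cases "i < n")
    case True
    have "(\<Sum>t\<in>{1..n}. phi t x * rho t i) = (\<Sum>t\<in>{1..n}. if t \<le> rk i then eps i * phi t x else 0)"
      unfolding rho_def using True by (intro sum.cong) auto
    also have "\<dots> = (\<Sum>t\<in>{1..n} \<inter> {t. t \<le> rk i}. eps i * phi t x)"
      by (simp add: sum.inter_restrict)
    also have "{1..n} \<inter> {t. t \<le> rk i} = {1..rk i}" using rk_le[of i] by auto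
    also have "(\<Sum>t\<in>{1..rk i}. eps i * phi t x) = eps i * (\<Sum>t\<in>{1..rk i}. phi t x)"
      by (rule sum_distrib_left[symmetric])
    also have "\<dots> = eps i * Lv (rk i) x" by (simp only: sum_phi)
    also have "\<dots> = x i" using Lv_rk[OF True] eps_sq[OF True] by (simp add: mult.assoc[symmetric])
    finally show ?thesis by simp
  next
    case False
    then show ?thesis using assms by (simp add: rho_def Rn_def)
  qed
qed

lemma Lv_rho: "Lv s (rho t) = (if 1 \<le> s \<and> s \<le> n \<and> t \<le> s then 1 else 0)"
proof (cases "1 \<le> s \<and> s \<le> n")
  case True
  then obtain i where i: "i < n" "rk i = s" using rk_surj by auto
  show ?thesis using Lv_rk[OF i(1)] i eps_sq[OF i(1)] True by (simp add: rho_def)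
next
  case False
  then show ?thesis using Lv_out by auto
qed

lemma phi_rho: "s \<in> {1..n} \<Longrightarrow> t \<in> {1..n} \<Longrightarrow> phi s (rho t) = (if s = t then 1 else 0)"
  unfolding phi_def Lv_rho by auto

lemma Lv_lin: "Lv s (\<lambda>i. \<Sum>t\<in>T. c t * y t i) = (\<Sum>t\<in>T. c t * Lv s (y t))"
proof -
  have "Lv s (\<lambda>i. \<Sum>t\<in>T. c t * y t i) = (\<Sum>i<n. \<Sum>t\<in>T. if rk i = s then c t * (eps i * y t i) else 0)"
    unfolding Lv_def
  proof (intro sum.cong refl)
    fix i
    show "(if rk i = s then eps i * (\<Sum>t\<in>T. c t * y t i) else 0) =
        (\<Sum>t\<in>T. if rk i = s then c t * (eps i * y t i) else 0)"
      by (cases "rk i = s") (simp_all add: sum_distrib_left algebra_simps)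
  qed
  also have "\<dots> = (\<Sum>t\<in>T. \<Sum>i<n. if rk i = s then c t * (eps i * y t i) else 0)"
    by (rule sum.swap)
  also have "\<dots> = (\<Sum>t\<in>T. c t * Lv s (y t))"
    unfolding Lv_def
  proof (intro sum.cong refl)
    fix t
    show "(\<Sum>i<n. if rk i = s then c t * (eps i * y t i) else 0) =
        c t * (\<Sum>i<n. if rk i = s then eps i * y t i else 0)"
      by (auto simp: sum_distrib_left intro!: sum.cong)
  qed
  finally show ?thesis .
qed

lemma phi_lin: "phi s (\<lambda>i. \<Sum>t\<in>T. c t * y t i) = (\<Sum>t\<in>T. c t * phi s (y t))"
  unfolding phi_def Lv_lin by (simp add: sum_subtractf algebra_simps)

lemma rho_Rn: "rho t \<in> Rn n"
  by (simp add: rho_def Rn_def)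

lemma rho_compat:
  assumes i: "i < n" and j: "j < n" and e: "e = 1 \<or> e = -1"
  shows "compat (u i - e * u j) (rho t i - e * rho t j)"
proof -
  define A where "A = \<bar>u i\<bar>"
  define B where "B = \<bar>u j\<bar>"
  define \<alpha> where "\<alpha> = (if t \<le> rk i then 1 else 0::real)"
  define \<beta> where "\<beta> = (if t \<le> rk j then 1 else 0::real)"
  define f where "f = e * eps j"
  have f: "f = 1 \<or> f = -1" using e eps_cases[OF j] by (auto simp: f_def)
  have ui: "u i - e * u j = eps i * A - f * B"
    using u_eps[of i] u_eps[of j] by (simp add: A_def B_def f_def)
  have ri: "rho t i - e * rho t j = eps i * \<alpha> - f * \<beta>"
    using i j by (simp add: rho_def \<alpha>_def \<beta>_def f_def)
  have c1: "compat (A - B) (\<alpha> - \<beta>)"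
  proof -
    have "A > B \<Longrightarrow> \<alpha> \<ge> \<beta>" using rk_strict[OF i j] by (auto simp: A_def B_def \<alpha>_def \<beta>_def)
    moreover have "A < B \<Longrightarrow> \<alpha> \<le> \<beta>" using rk_strict[OF j i] by (auto simp: A_def B_def \<alpha>_def \<beta>_def)
    moreover have "A = B \<Longrightarrow> \<alpha> = \<beta>" using u_dist[OF i j] by (auto simp: A_def B_def \<alpha>_def \<beta>_def)
    ultimately show ?thesis unfolding compat_def by auto
  qed
  have c2: "compat (A + B) (\<alpha> + \<beta>)"
  proof -
    have "A > 0" using u_nz[OF i] by (simp add: A_def)
    moreover have "B > 0" using u_nz[OF j] by (simp add: B_def)
    moreover have "\<alpha> \<ge> 0" "\<beta> \<ge> 0" by (auto simp: \<alpha>_def \<beta>_def)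
    ultimately show ?thesis unfolding compat_def by auto
  qed
  have "compat (eps i * A - f * B) (eps i * \<alpha> - f * \<beta>)" (is ?G)
    using eps_cases[OF i] f
  proof (elim disjE)
    assume "eps i = 1" "f = 1" then show ?G using c1 by simp
  next
    assume "eps i = 1" "f = -1" then show ?G using c2 by simp
  next
    assume "eps i = -1" "f = 1" then show ?G using c2 compat_neg[of "A+B" "\<alpha>+\<beta>"] by (simp add: algebra_simps)
  next
    assume "eps i = -1" "f = -1" then show ?G using c1 compat_neg[of "A-B" "\<alpha>-\<beta>"] by (simp add: algebra_simps)
  qed
  then show ?thesis using ui ri by simp
qed

lemma rho_G: "rho t \<in> G n u"
proof -
  have "compat (u i - u j) (rho t i - rho t j) \<and> compat (u i + u j) (rho t i + rho t j)"
    if "i < n" "j < n" for i j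
    using rho_compat[OF that, of 1 t] rho_compat[OF that, of "-1" t] by simp
  then show ?thesis using rho_Rn by (simp add: G_def)
qed

lemma phi_form:
  assumes t: "t \<in> {1..n}"
  obtains a where "a < n" "rk a = t" "\<And>x. phi t x = eps a * x a" "t = 1"
  | a b where "a < n" "b < n" "rk a = t" "rk b = t - 1" "\<And>x. phi t x = eps a * x a - eps b * x b" "t \<noteq> 1"
proof (cases "t = 1")
  case True
  obtain a where a: "a < n" "rk a = t" using rk_surj t by auto
  have "\<And>x. phi t x = eps a * x a" unfolding phi_def using Lv_rk[OF a(1)] a(2) True Lv_0 by simp
  from that(1)[OF a this True] show ?thesis .
next
  case False
  obtain a where a: "a < n" "rk a = t" using rk_surj t by auto
  have "t - 1 \<in> {1..n}" using t False by auto
  then obtain b where b: "b < n" "rk b = t - 1" using rk_surj by blast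
  have "phi t x = eps a * x a - eps b * x b" for x
  proof -
    have "phi t x = Lv (rk a) x - Lv (rk b) x" using a b by (simp add: phi_def)
    then show ?thesis using Lv_rk[OF a(1)] Lv_rk[OF b(1)] by simp
  qed
  from that(2)[OF a(1) b(1) a(2) b(2) this False] show ?thesis .
qed

lemma phi_compat:
  assumes t: "t \<in> {1..n}" and x: "x \<in> G n w"
  shows "compat (phi t w) (phi t x)"
  using t
proof (cases rule: phi_form)
  case (1 a)
  then show ?thesis using G_signed1[OF x 1(1) eps_cases[OF 1(1)]] by simp
next
  case (2 a b)
  then show ?thesis using G_signed[OF x 2(1,2) eps_cases[OF 2(1)] eps_cases[OF 2(2)]] by simp
qed

lemma phi_u_pos: assumes t: "t \<in> {1..n}" shows "0 < phi t u"
  using t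
proof (cases rule: phi_form)
  case (1 a)
  then show ?thesis using u_nz[of a] by (simp add: eps_u)
next
  case (2 a b)
  then have "\<bar>u b\<bar> < \<bar>u a\<bar>" using rk_less_iff[of a b] t by simp
  then show ?thesis using 2 by (simp add: eps_u)
qed

lemma G_char: "G n u = {x \<in> Rn n. \<forall>t\<in>{1..n}. 0 \<le> phi t x}"
proof
  show "G n u \<subseteq> {x \<in> Rn n. \<forall>t\<in>{1..n}. 0 \<le> phi t x}"
  proof
    fix x assume x: "x \<in> G n u"
    have "0 \<le> phi t x" if "t \<in> {1..n}" for t
      using phi_compat[OF that x] phi_u_pos[OF that] unfolding compat_def by auto
    then show "x \<in> {x \<in> Rn n. \<forall>t\<in>{1..n}. 0 \<le> phi t x}" using x by (auto simp: G_def)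
  qed
next
  show "{x \<in> Rn n. \<forall>t\<in>{1..n}. 0 \<le> phi t x} \<subseteq> G n u"
  proof
    fix x assume x: "x \<in> {x \<in> Rn n. \<forall>t\<in>{1..n}. 0 \<le> phi t x}"
    then have "x = (\<lambda>i. \<Sum>t\<in>{1..n}. phi t x * rho t i)" using decomp by auto
    also have "\<dots> \<in> G n u" using x rho_G by (intro G_sum) auto
    finally show "x \<in> G n u" .
  qed
qed

lemma compat_sum_back:
  assumes "finite T" "t \<in> T" "\<And>s. s \<in> T \<Longrightarrow> compat a (b s)" "\<And>s. s \<in> T \<Longrightarrow> 0 \<le> c s" "0 < c t"
  shows "compat (\<Sum>s\<in>T. c s * b s) (b t)"
proof -
  consider "0 < a" | "a < 0" | "a = 0" by linarith
  then show ?thesis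
  proof cases
    case 1
    then have bs: "\<And>s. s \<in> T \<Longrightarrow> 0 \<le> b s" using assms(3) unfolding compat_def by auto
    have nn: "\<And>s. s \<in> T \<Longrightarrow> 0 \<le> c s * b s" using bs assms(4) by auto
    have "(\<Sum>s\<in>T. c s * b s) = 0 \<Longrightarrow> c t * b t = 0"
      using sum_nonneg_eq_0_iff[OF assms(1) nn] assms(2) by auto
    moreover have "0 \<le> (\<Sum>s\<in>T. c s * b s)" using nn by (simp add: sum_nonneg)
    ultimately show ?thesis using bs[OF assms(2)] assms(5) unfolding compat_def by auto
  next
    case 2
    then have bs: "\<And>s. s \<in> T \<Longrightarrow> 0 \<le> - b s" using assms(3) unfolding compat_def by auto
    have nn: "\<And>s. s \<in> T \<Longrightarrow> 0 \<le> c s * - b s" using bs assms(4) by (metis mult_nonneg_nonneg)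
    have "(\<Sum>s\<in>T. c s * - b s) = 0 \<Longrightarrow> c t * - b t = 0"
      using sum_nonneg_eq_0_iff[OF assms(1) nn] assms(2) by auto
    moreover have "(\<Sum>s\<in>T. c s * - b s) = - (\<Sum>s\<in>T. c s * b s)" by (simp add: sum_negf)
    moreover have "0 \<le> (\<Sum>s\<in>T. c s * - b s)" using nn by (simp add: sum_nonneg)
    ultimately show ?thesis using bs[OF assms(2)] assms(5) unfolding compat_def by auto
  next
    case 3
    then have "\<And>s. s \<in> T \<Longrightarrow> b s = 0" using assms(3) unfolding compat_def by auto
    then show ?thesis using assms(2) by simp
  qed
qed

lemma rho_in_face:
  assumes w: "w \<in> G n u" and t: "t \<in> {1..n}" and nz: "phi t w \<noteq> 0"
  shows "rho t \<in> G n w"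
proof -
  have wR: "w \<in> Rn n" using w by (simp add: G_def)
  have wd: "w = (\<lambda>i. \<Sum>s\<in>{1..n}. phi s w * rho s i)" using decomp[OF wR] .
  have pos: "\<And>s. s \<in> {1..n} \<Longrightarrow> 0 \<le> phi s w" using w G_char by auto
  then have tpos: "0 < phi t w" using nz t by force
  have "compat (w i - e * w j) (rho t i - e * rho t j)" if "i < n" "j < n" "e = 1 \<or> e = -1" for i j e
  proof -
    have "w i - e * w j = (\<Sum>s\<in>{1..n}. phi s w * (rho s i - e * rho s j))"
      by (subst (1 2) wd) (simp add: sum_subtractf sum_distrib_left algebra_simps)
    moreover have "compat (\<Sum>s\<in>{1..n}. phi s w * (rho s i - e * rho s j)) (rho t i - e * rho t j)"
      by (rule compat_sum_back[where a="u i - e * u j"]) (use t tpos pos rho_compat[OF that] in auto)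
    ultimately show ?thesis by simp
  qed
  from this[of _ _ 1] this[of _ _ "-1"] show ?thesis using rho_Rn by (simp add: G_def)
qed

lemma face:
  assumes w: "w \<in> G n u"
  shows "G n w = {x \<in> G n u. \<forall>t\<in>{1..n}. phi t w = 0 \<longrightarrow> phi t x = 0}"
proof
  show "G n w \<subseteq> {x \<in> G n u. \<forall>t\<in>{1..n}. phi t w = 0 \<longrightarrow> phi t x = 0}"
    using G_mono[OF w] phi_compat unfolding compat_def by blast
next
  show "{x \<in> G n u. \<forall>t\<in>{1..n}. phi t w = 0 \<longrightarrow> phi t x = 0} \<subseteq> G n w"
  proof
    fix x assume x: "x \<in> {x \<in> G n u. \<forall>t\<in>{1..n}. phi t w = 0 \<longrightarrow> phi t x = 0}"
    then have xR: "x \<in> Rn n" by (simp add: G_def)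
    have pos: "\<And>t. t \<in> {1..n} \<Longrightarrow> 0 \<le> phi t x" using x G_char by auto
    have "x = (\<lambda>i. \<Sum>t\<in>{1..n}. phi t x * rho t i)" using decomp[OF xR] .
    also have "\<dots> = (\<lambda>i. \<Sum>t\<in>{t\<in>{1..n}. phi t w \<noteq> 0}. phi t x * rho t i)"
      using x by (intro ext sum.mono_neutral_right) auto
    also have "\<dots> \<in> G n w" using rho_in_face[OF w] pos by (intro G_sum) auto
    finally show "x \<in> G n w" .
  qed
qed

end


context chamber
begin

lemma phi_rho_img: "s \<in> {1..n} \<Longrightarrow> v \<in> rho ` {1..n} \<Longrightarrow> phi s v = (if v = rho s then 1 else 0)"
proof -
  assume s: "s \<in> {1..n}" and v: "v \<in> rho ` {1..n}"
  then obtain t where t: "t \<in> {1..n}" "v = rho t" by auto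
  show ?thesis
  proof (cases "t = s")
    case True then show ?thesis using t s phi_rho by simp
  next
    case False
    have "rho t \<noteq> rho s"
    proof
      assume "rho t = rho s"
      then have "phi s (rho t) = phi s (rho s)" by simp
      then show False using phi_rho[OF s t(1)] phi_rho[OF s s] False by simp
    qed
    then show ?thesis using t s phi_rho False by simp
  qed
qed

lemma rho_inj: "inj_on rho {1..n}"
proof (rule inj_onI)
  fix s t assume s: "s \<in> {1..n}" and t: "t \<in> {1..n}" and e: "rho s = rho t"
  have "phi s (rho s) = phi s (rho t)" using e by simp
  then show "s = t" using phi_rho[OF s s] phi_rho[OF s t] by (auto split: if_splits)
qed

lemma fun_sum_scale: "(\<Sum>v\<in>T. scaleF (c v) (f v)) = (\<lambda>i. \<Sum>v\<in>T. c v * f v i)"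
  by (rule ext) (simp add: sum_fun_apply scaleF_def)

lemma indep:
  assumes T: "T \<subseteq> {1..n}"
  shows "VS.independent (rho ` T)"
  unfolding VS.independent_explicit_module
proof (intro allI impI)
  fix T0 c v
  assume a1: "finite T0" "T0 \<subseteq> rho ` T" "(\<Sum>v\<in>T0. scaleF (c v) v) = 0" "v \<in> T0"
  then have a: "finite T0 \<and> T0 \<subseteq> rho ` T \<and> (\<Sum>v\<in>T0. scaleF (c v) v) = 0 \<and> v \<in> T0" by simp
  then obtain s where s: "s \<in> T" "v = rho s" by auto
  have s1: "s \<in> {1..n}" using s T by auto
  have "(\<lambda>i. \<Sum>v\<in>T0. c v * v i) = 0" using a fun_sum_scale[of c "\<lambda>v. v" T0] by simp
  then have h: "\<And>i. (\<Sum>v\<in>T0. c v * v i) = 0" by (metis zero_fun_apply)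
  have "phi s (\<lambda>i. \<Sum>v\<in>T0. c v * v i) = 0" by (simp add: phi_def Lv_def h cong: if_cong)
  then have "(\<Sum>v\<in>T0. c v * phi s v) = 0" by (simp add: phi_lin)
  moreover have "(\<Sum>v\<in>T0. c v * phi s v) = (\<Sum>v\<in>T0. if v = rho s then c v else 0)"
  proof (intro sum.cong refl)
    fix v assume "v \<in> T0"
    then have "v \<in> rho ` {1..n}" using a T by blast
    then show "c v * phi s v = (if v = rho s then c v else 0)" using phi_rho_img[OF s1] by simp
  qed
  moreover have "\<dots> = c (rho s)" using a s by (simp add: sum.delta)
  ultimately show "c v = 0" using s by simp
qed

lemma in_span_rho:
  assumes x: "x \<in> G n u" and w: "w \<in> G n u" and z: "\<forall>t\<in>{1..n}. phi t w = 0 \<longrightarrow> phi t x = 0"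
  shows "x = (\<lambda>i. \<Sum>t\<in>{t\<in>{1..n}. phi t w \<noteq> 0}. phi t x * rho t i)"
proof -
  have xR: "x \<in> Rn n" using x by (simp add: G_def)
  have "x = (\<lambda>i. \<Sum>t\<in>{1..n}. phi t x * rho t i)" using decomp[OF xR] .
  also have "\<dots> = (\<lambda>i. \<Sum>t\<in>{t\<in>{1..n}. phi t w \<noteq> 0}. phi t x * rho t i)"
    using z by (intro ext sum.mono_neutral_right) auto
  finally show ?thesis .
qed

lemma span_dim_face:
  assumes w: "w \<in> G n u"
  shows "span_dim (G n w) = card {t\<in>{1..n}. phi t w \<noteq> 0}"
proof -
  define T' where "T' = {t\<in>{1..n}. phi t w \<noteq> 0}"
  define R where "R = rho ` T'"
  have RG: "R \<subseteq> G n w" using rho_in_face[OF w] by (auto simp: R_def T'_def)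
  have GR: "G n w \<subseteq> VS.span R"
  proof
    fix x assume xw: "x \<in> G n w"
    then have x: "x \<in> G n u" "\<forall>t\<in>{1..n}. phi t w = 0 \<longrightarrow> phi t x = 0"
      using face[OF w] by auto
    have "x = (\<lambda>i. \<Sum>t\<in>T'. phi t x * rho t i)" using in_span_rho[OF x(1) w x(2)] by (simp add: T'_def)
    also have "\<dots> = (\<Sum>t\<in>T'. scaleF (phi t x) (rho t))" using fun_sum_scale[of "\<lambda>t. phi t x" rho T'] by simp
    also have "\<dots> \<in> VS.span R"
      by (intro VS.span_sum VS.span_scale VS.span_base) (auto simp: R_def)
    finally show "x \<in> VS.span R" .
  qed
  have "VS.span (G n w) = VS.span R"
  proof
    show "VS.span (G n w) \<subseteq> VS.span R" using VS.span_mono[OF GR] VS.span_span by simp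
    show "VS.span R \<subseteq> VS.span (G n w)" using VS.span_mono[OF RG] .
  qed
  then have "span_dim (G n w) = VS.dim R"
    unfolding span_dim_def by (metis VS.dim_span)
  also have "\<dots> = card R"
  proof -
    have "T' \<subseteq> {1..n}" by (auto simp: T'_def)
    from indep[OF this] show ?thesis by (intro VS.dim_eq_card_independent) (simp add: R_def)
  qed
  also have "\<dots> = card T'" unfolding R_def
    by (rule card_image) (rule inj_on_subset[OF rho_inj], auto simp: T'_def)
  finally show ?thesis by (simp add: T'_def)
qed

definition wZ :: "nat set \<Rightarrow> nat \<Rightarrow> real" where
  "wZ Z = (\<lambda>i. \<Sum>t\<in>{1..n} - Z. 1 * rho t i)"

lemma wZ_G: "wZ Z \<in> G n u"
  unfolding wZ_def by (rule G_sum) (auto intro: rho_G)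

lemma phi_wZ: "t \<in> {1..n} \<Longrightarrow> phi t (wZ Z) = (if t \<in> Z then 0 else 1)"
proof -
  assume t: "t \<in> {1..n}"
  have "phi t (wZ Z) = (\<Sum>s\<in>{1..n} - Z. 1 * phi t (rho s))" unfolding wZ_def phi_lin ..
  also have "\<dots> = (\<Sum>s\<in>{1..n} - Z. if t = s then 1 else 0)"
    using phi_rho[OF t] by (intro sum.cong) auto
  also have "\<dots> = (if t \<in> Z then 0 else 1)" using t by (simp add: sum.delta)
  finally show ?thesis .
qed

lemma face_wZ: "Z \<subseteq> {1..n} \<Longrightarrow> G n (wZ Z) = {x \<in> G n u. \<forall>t\<in>Z. phi t x = 0}"
  using face[OF wZ_G] phi_wZ by auto

lemma wZ_val: "i < n \<Longrightarrow> wZ Z i = eps i * card ({1..rk i} - Z)"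
proof -
  assume i: "i < n"
  have "wZ Z i = (\<Sum>t\<in>{1..n} - Z. if t \<le> rk i then eps i else 0)"
    unfolding wZ_def rho_def using i by simp
  also have "\<dots> = (\<Sum>t\<in>({1..n} - Z) \<inter> {t. t \<le> rk i}. eps i)"
    by (subst sum.inter_restrict) auto
  also have "({1..n} - Z) \<inter> {t. t \<le> rk i} = {1..rk i} - Z" using rk_le[of i] by auto
  finally show ?thesis by simp
qed

lemma lin_decomp:
  assumes x: "x \<in> Rn n"
  shows "(\<Sum>i<n. a i * x i) = (\<Sum>t\<in>{1..n}. phi t x * (\<Sum>i<n. a i * rho t i))"
proof -
  have "(\<Sum>i<n. a i * x i) = (\<Sum>i<n. a i * (\<Sum>t\<in>{1..n}. phi t x * rho t i))"
    by (subst decomp[OF x]) simp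
  also have "\<dots> = (\<Sum>i<n. \<Sum>t\<in>{1..n}. phi t x * (a i * rho t i))"
    by (simp add: sum_distrib_left algebra_simps)
  also have "\<dots> = (\<Sum>t\<in>{1..n}. \<Sum>i<n. phi t x * (a i * rho t i))" by (rule sum.swap)
  also have "\<dots> = (\<Sum>t\<in>{1..n}. phi t x * (\<Sum>i<n. a i * rho t i))"
    by (simp add: sum_distrib_left)
  finally show ?thesis .
qed

lemma supp_face:
  assumes sub: "G n u \<subseteq> {x. (\<Sum>i<n. a i * x i) \<le> b}"
    and ne: "G n u \<inter> {x \<in> Rn n. (\<Sum>i<n. a i * x i) = b} \<noteq> {}"
  shows "G n u \<inter> {x \<in> Rn n. (\<Sum>i<n. a i * x i) = b} = G n (wZ {t\<in>{1..n}. (\<Sum>i<n. a i * rho t i) < 0})"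
proof -
  define al where "al t = (\<Sum>i<n. a i * rho t i)" for t
  have "(0::nat\<Rightarrow>real) \<in> {x. (\<Sum>i<n. a i * x i) \<le> b}" using sub G_zero[of n u] by blast
  then have b0: "0 \<le> b" by simp
  have al_le: "al t \<le> 0" if t: "t \<in> {1..n}" for t
  proof (rule ccontr)
    assume "\<not> al t \<le> 0"
    then have pos: "0 < al t" by simp
    define c where "c = (b + 1) / al t"
    have c0: "0 \<le> c" using pos b0 by (simp add: c_def)
    have "(\<lambda>i. \<Sum>s\<in>{t}. c * rho s i) \<in> G n u" using c0 rho_G by (intro G_sum) auto
    then have "(\<lambda>i. c * rho t i) \<in> G n u" by simp
    then have "(\<Sum>i<n. a i * (c * rho t i)) \<le> b" using sub by auto
    moreover have "(\<Sum>i<n. a i * (c * rho t i)) = c * al t"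
      by (simp add: al_def sum_distrib_left algebra_simps)
    moreover have "c * al t = b + 1" using pos by (simp add: c_def)
    ultimately show False by simp
  qed
  have lin: "x \<in> G n u \<Longrightarrow> (\<Sum>i<n. a i * x i) = (\<Sum>t\<in>{1..n}. phi t x * al t)" for x
    using lin_decomp[of x a] by (simp add: G_def al_def)
  have nonpos: "x \<in> G n u \<Longrightarrow> t \<in> {1..n} \<Longrightarrow> phi t x * al t \<le> 0" for x t
    using G_char al_le by (auto simp: mult_nonneg_nonpos)
  have b00: "b = 0"
  proof -
    obtain x where x: "x \<in> G n u" "(\<Sum>i<n. a i * x i) = b" using ne by auto
    have "(\<Sum>t\<in>{1..n}. phi t x * al t) \<le> 0" using nonpos[OF x(1)] by (intro sum_nonpos) auto
    then show ?thesis using x lin b0 by auto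
  qed
  have "G n u \<inter> {x \<in> Rn n. (\<Sum>i<n. a i * x i) = b} = {x \<in> G n u. \<forall>t\<in>{t\<in>{1..n}. al t < 0}. phi t x = 0}"
  proof (intro set_eqI iffI)
    fix x assume x: "x \<in> G n u \<inter> {x \<in> Rn n. (\<Sum>i<n. a i * x i) = b}"
    then have xG: "x \<in> G n u" and xs: "(\<Sum>i<n. a i * x i) = b" by auto
    then have "(\<Sum>t\<in>{1..n}. - (phi t x * al t)) = 0" using lin[OF xG] b00 by (simp add: sum_negf)
    then have "\<forall>t\<in>{1..n}. - (phi t x * al t) = 0"
      using sum_nonneg_eq_0_iff[of "{1..n}" "\<lambda>t. - (phi t x * al t)"] nonpos x by auto
    then show "x \<in> {x \<in> G n u. \<forall>t\<in>{t\<in>{1..n}. al t < 0}. phi t x = 0}" using x by auto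
  next
    fix x assume x: "x \<in> {x \<in> G n u. \<forall>t\<in>{t\<in>{1..n}. al t < 0}. phi t x = 0}"
    then have "\<forall>t\<in>{1..n}. phi t x * al t = 0" using al_le by (metis (mono_tags, lifting) mem_Collect_eq mult_eq_0_iff order_less_le)
    moreover have xG: "x \<in> G n u" using x by simp
    ultimately have "(\<Sum>i<n. a i * x i) = b" using lin[OF xG] b00 by (simp add: sum.neutral)
    then show "x \<in> G n u \<inter> {x \<in> Rn n. (\<Sum>i<n. a i * x i) = b}" using x by (auto simp: G_def)
  qed
  also have "\<dots> = G n (wZ {t\<in>{1..n}. al t < 0})" by (rule face_wZ[symmetric]) auto
  finally show ?thesis by (simp add: al_def)
qed

end


context chamber
begin

lemma phi_coef: "(\<Sum>i<n. ((if rk i = t then eps i else 0) - (if rk i = t - 1 then eps i else 0)) * x i) = phi t x"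
  unfolding phi_def Lv_def sum_subtractf[symmetric]
  by (intro sum.cong refl) auto

lemma face_supp:
  assumes Z: "Z \<subseteq> {1..n}" "Z \<noteq> {}"
  shows "\<exists>a. (\<exists>i<n. a i \<noteq> 0) \<and> G n u \<subseteq> {x. (\<Sum>i<n. a i * x i) \<le> 0} \<and>
     G n u \<inter> {x\<in>Rn n. (\<Sum>i<n. a i * x i) = 0} = {x\<in>G n u. \<forall>t\<in>Z. phi t x = 0}"
proof -
  define cf where "cf t i = ((if rk i = t then eps i else 0) - (if rk i = t - 1 then eps i else 0))" for t i
  define a where "a i = - (\<Sum>t\<in>Z. cf t i)" for i
  have finZ: "finite Z" using Z finite_subset by blast
  have lin: "(\<Sum>i<n. a i * x i) = - (\<Sum>t\<in>Z. phi t x)" for x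
  proof -
    have "(\<Sum>i<n. a i * x i) = - (\<Sum>i<n. \<Sum>t\<in>Z. cf t i * x i)"
      by (simp add: a_def sum_distrib_right sum_negf)
    also have "\<dots> = - (\<Sum>t\<in>Z. \<Sum>i<n. cf t i * x i)" by (simp add: sum.swap[of _ "{..<n}"])
    also have "\<dots> = - (\<Sum>t\<in>Z. phi t x)" using phi_coef by (simp add: cf_def)
    finally show ?thesis .
  qed
  define t0 where "t0 = Max Z"
  have t0: "t0 \<in> Z" using finZ Z by (simp add: t0_def)
  have t0m: "\<And>t. t \<in> Z \<Longrightarrow> t \<le> t0" using finZ by (simp add: t0_def)
  obtain i0 where i0: "i0 < n" "rk i0 = t0" using rk_surj t0 Z by blast
  have "(\<Sum>t\<in>Z. cf t i0) = (\<Sum>t\<in>Z. if t = t0 then eps i0 else 0)"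
  proof (intro sum.cong refl)
    fix t assume t: "t \<in> Z"
    have "t0 \<noteq> t - 1 \<or> t0 = t" using t0m[OF t] Z t by force
    then show "cf t i0 = (if t = t0 then eps i0 else 0)" using i0 t0m[OF t] rk_ge1[OF i0(1)] by (auto simp: cf_def)
  qed
  also have "\<dots> = eps i0" using t0 finZ by (simp add: sum.delta')
  finally have "a i0 = - eps i0" by (simp add: a_def)
  then have anz: "a i0 \<noteq> 0" using eps_cases[OF i0(1)] by auto
  have nn: "x \<in> G n u \<Longrightarrow> t \<in> Z \<Longrightarrow> 0 \<le> phi t x" for x t using G_char Z by blast
  have sub: "G n u \<subseteq> {x. (\<Sum>i<n. a i * x i) \<le> 0}"
  proof
    fix x assume x: "x \<in> G n u"
    have "0 \<le> (\<Sum>t\<in>Z. phi t x)" using nn[OF x] by (intro sum_nonneg) auto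
    then show "x \<in> {x. (\<Sum>i<n. a i * x i) \<le> 0}" using lin[of x] by simp
  qed
  have eq: "G n u \<inter> {x\<in>Rn n. (\<Sum>i<n. a i * x i) = 0} = {x\<in>G n u. \<forall>t\<in>Z. phi t x = 0}"
  proof (intro set_eqI iffI)
    fix x assume x: "x \<in> G n u \<inter> {x\<in>Rn n. (\<Sum>i<n. a i * x i) = 0}"
    then have xG: "x \<in> G n u" by simp
    have "(\<Sum>t\<in>Z. phi t x) = 0" using x lin[of x] by simp
    then have "\<forall>t\<in>Z. phi t x = 0" using sum_nonneg_eq_0_iff[OF finZ, of "\<lambda>t. phi t x"] nn[OF xG] by auto
    then show "x \<in> {x\<in>G n u. \<forall>t\<in>Z. phi t x = 0}" using xG by simp
  next
    fix x assume x: "x \<in> {x\<in>G n u. \<forall>t\<in>Z. phi t x = 0}"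
    then have "(\<Sum>t\<in>Z. phi t x) = 0" by simp
    then show "x \<in> G n u \<inter> {x\<in>Rn n. (\<Sum>i<n. a i * x i) = 0}" using x lin[of x] by (auto simp: G_def)
  qed
  show ?thesis using anz i0 sub eq by blast
qed

end

lemma arr_c_iff: "x \<in> arr_complement n \<longleftrightarrow>
   x \<in> W0 n \<and> (\<forall>i<n. x i \<noteq> 0) \<and> (\<forall>i j. i < j \<and> j < n \<longrightarrow> x i + x j \<noteq> 0)"
proof -
  have W: "x \<in> W0 n \<Longrightarrow> x \<in> Rn n" by (simp add: W0_def)
  show ?thesis unfolding arr_complement_def lam_perp_def
    using W by (auto simp: le_less)
qed

lemma W0_Wc: "W0 n \<subseteq> Wc n"
  by (auto simp: W0_def Wc_def le_less)

lemma arr_chamber: assumes u: "u \<in> arr_complement n" shows "chamber n u"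
proof
  have uW: "u \<in> W0 n" using u arr_c_iff by blast
  then show "u \<in> Rn n" by (simp add: W0_def)
  show "\<And>i. i < n \<Longrightarrow> u i \<noteq> 0" using u arr_c_iff by blast
  show "\<bar>u i\<bar> \<noteq> \<bar>u j\<bar>" if "i < n" "j < n" "i \<noteq> j" for i j
  proof
    assume e: "\<bar>u i\<bar> = \<bar>u j\<bar>"
    have ne: "u i \<noteq> u j" using uW that by (auto simp: W0_def) (metis less_irrefl linorder_neqE_nat)
    have "u i + u j \<noteq> 0" using u arr_c_iff that by (metis add.commute linorder_neqE_nat)
    then show False using e ne by (auto simp: abs_if split: if_splits)
  qed
qed

definition Aset :: "nat \<Rightarrow> (nat \<Rightarrow> real) \<Rightarrow> (nat \<Rightarrow> real) set" where
  "Aset n u = {x \<in> Rn n. \<forall>i<n. \<forall>j<n. sgn (x i - x j) = sgn (u i - u j) \<and> sgn (x i + x j) = sgn (u i + u j)}"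

lemma Aset_sub: assumes u: "u \<in> arr_complement n" shows "Aset n u \<subseteq> arr_complement n"
proof
  fix x assume x: "x \<in> Aset n u"
  have uW: "u \<in> W0 n" using u arr_c_iff by blast
  have "x \<in> W0 n"
  proof -
    have "x j < x i" if "i < j" "j < n" for i j
    proof -
      have "u j < u i" using uW that by (auto simp: W0_def)
      moreover have "sgn (x i - x j) = sgn (u i - u j)" using x that by (auto simp: Aset_def)
      ultimately show ?thesis by (simp add: sgn_if split: if_splits)
    qed
    then show ?thesis using x by (auto simp: W0_def Aset_def)
  qed
  moreover have "x i \<noteq> 0" if "i < n" for i
  proof -
    have "u i \<noteq> 0" using u arr_c_iff that by blast
    moreover have "sgn (x i + x i) = sgn (u i + u i)" using x that unfolding Aset_def by blast
    ultimately show ?thesis by (auto simp: sgn_if split: if_splits)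
  qed
  moreover have "x i + x j \<noteq> 0" if "i < j" "j < n" for i j
  proof -
    have "u i + u j \<noteq> 0" using u arr_c_iff that by blast
    moreover have "sgn (x i + x j) = sgn (u i + u j)" using x that by (auto simp: Aset_def)
    ultimately show ?thesis by (auto simp: sgn_if split: if_splits)
  qed
  ultimately show "x \<in> arr_complement n" using arr_c_iff by blast
qed

lemma sgn_comb: fixes a b t :: real shows "sgn a = sgn b \<Longrightarrow> 0 \<le> t \<Longrightarrow> t \<le> 1 \<Longrightarrow> sgn ((1 - t) * a + t * b) = sgn a"
proof -
  assume h: "sgn a = sgn b" "0 \<le> t" "t \<le> 1"
  consider "0 < a" | "a < 0" | "a = 0" by linarith
  then show ?thesis
  proof cases
    case 1
    then have "0 < b" using h(1) by (simp add: sgn_if split: if_splits)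
    moreover have "0 \<le> (1 - t) * a" using 1 h by simp
    moreover have "0 \<le> t * b" using calculation h by simp
    moreover have "0 < (1 - t) * a \<or> 0 < t * b" using 1 \<open>0 < b\<close> h
      by (cases "t = 1") (auto intro: mult_pos_pos)
    ultimately have "0 < (1 - t) * a + t * b" by linarith
    then show ?thesis using 1 by (simp add: sgn_if)
  next
    case 2
    then have "b < 0" using h(1) by (simp add: sgn_if split: if_splits)
    moreover have "(1 - t) * a \<le> 0" using 2 h by (simp add: mult_nonneg_nonpos)
    moreover have "t * b \<le> 0" using calculation h by (simp add: mult_nonneg_nonpos)
    moreover have "(1 - t) * a < 0 \<or> t * b < 0" using 2 \<open>b < 0\<close> h
      by (cases "t = 1") (auto intro: mult_pos_neg)
    ultimately have "(1 - t) * a + t * b < 0" by linarith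
    then show ?thesis using 2 by (simp add: sgn_if)
  next
    case 3
    then have "b = 0" using h(1) by (simp add: sgn_if split: if_splits)
    then show ?thesis using 3 by simp
  qed
qed

lemma cont_coord: "continuous_on S (\<lambda>z::nat \<Rightarrow> real. z i)"
  by (rule continuous_on_subset[OF continuous_on_product_coordinates]) simp

lemma cont_seg: "continuous_on S (\<lambda>t::real. (\<lambda>i. (1 - t) * x i + t * y i))"
  by (intro continuous_on_coordinatewise_then_product continuous_intros)

lemma comp_eq:
  assumes u: "u \<in> arr_complement n"
  shows "connected_component_set (arr_complement n) u = Aset n u"
proof
  show "Aset n u \<subseteq> connected_component_set (arr_complement n) u"
  proof
    fix x assume x: "x \<in> Aset n u"
    define p where "p t = (\<lambda>i. (1 - t) * u i + t * x i)" for t :: real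
    have pA: "p ` {0..1} \<subseteq> Aset n u"
    proof
      fix y assume "y \<in> p ` {0..1}"
      then obtain t where t: "0 \<le> t" "t \<le> 1" "y = p t" by auto
      have uR: "u \<in> Rn n" using u arr_c_iff by (auto simp: W0_def)
      have "y \<in> Rn n" using uR x t by (auto simp: Rn_def Aset_def p_def)
      moreover have "sgn (y i - y j) = sgn (u i - u j) \<and> sgn (y i + y j) = sgn (u i + u j)"
        if "i < n" "j < n" for i j
      proof -
        have s: "sgn (u i - u j) = sgn (x i - x j)" "sgn (u i + u j) = sgn (x i + x j)"
          using x that by (auto simp: Aset_def)
        have "y i - y j = (1 - t) * (u i - u j) + t * (x i - x j)"
             "y i + y j = (1 - t) * (u i + u j) + t * (x i + x j)"
          by (simp_all add: t p_def algebra_simps)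
        then show ?thesis using sgn_comb[OF s(1) t(1,2)] sgn_comb[OF s(2) t(1,2)] by simp
      qed
      ultimately show "y \<in> Aset n u" by (auto simp: Aset_def)
    qed
    have "connected (p ` {0..1})"
      by (rule connected_continuous_image) (auto simp: p_def intro: cont_seg)
    moreover have "u \<in> p ` {0..1}" by (rule image_eqI[of _ _ 0]) (auto simp: p_def)
    moreover have "x \<in> p ` {0..1}" by (rule image_eqI[of _ _ 1]) (auto simp: p_def)
    ultimately show "x \<in> connected_component_set (arr_complement n) u"
      using pA Aset_sub[OF u] by (auto intro: connected_componentI)
  qed
next
  show "connected_component_set (arr_complement n) u \<subseteq> Aset n u"
  proof
    fix y assume "y \<in> connected_component_set (arr_complement n) u"
    then obtain T where T: "connected T" "T \<subseteq> arr_complement n" "u \<in> T" "y \<in> T"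
      by (auto simp: connected_component_def)
    have key: "sgn (f y) = sgn (f u)"
      if f: "continuous_on T f" and nz: "\<And>z. z \<in> T \<Longrightarrow> f z \<noteq> 0" for f :: "(nat \<Rightarrow> real) \<Rightarrow> real"
    proof (rule ccontr)
      assume ne: "sgn (f y) \<noteq> sgn (f u)"
      have c: "connected (f ` T)" using connected_continuous_image[OF f T(1)] .
      have fy: "f y \<in> f ` T" and fu: "f u \<in> f ` T" using T by auto
      have "f y < 0 \<and> 0 < f u \<or> f u < 0 \<and> 0 < f y"
        using ne nz[OF T(3)] nz[OF T(4)] by (auto simp: sgn_if split: if_splits)
      then have "0 \<in> f ` T"
        using connected_contains_Icc[OF c fy fu] connected_contains_Icc[OF c fu fy] by force
      then show False using nz by auto
    qed
    have yR: "y \<in> Rn n" using T arr_c_iff by (auto simp: W0_def)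
    have "sgn (y i - y j) = sgn (u i - u j) \<and> sgn (y i + y j) = sgn (u i + u j)" if ij: "i < n" "j < n" for i j
    proof
      show "sgn (y i - y j) = sgn (u i - u j)"
      proof (cases "i = j")
        case False
        have "z i - z j \<noteq> 0" if "z \<in> T" for z
        proof -
          have "z \<in> W0 n" using T that arr_c_iff by blast
          then show ?thesis using False ij by (auto simp: W0_def) (metis less_irrefl linorder_neqE_nat)
        qed
        then show ?thesis by (intro key) (auto intro!: continuous_intros cont_coord)
      qed simp
      show "sgn (y i + y j) = sgn (u i + u j)"
      proof -
        have "z i + z j \<noteq> 0" if "z \<in> T" for z
        proof -
          have z: "z \<in> arr_complement n" using T that by blast
          show ?thesis
          proof (cases "i = j")
            case True then show ?thesis using z arr_c_iff ij by auto
          next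
            case False
            then show ?thesis using z arr_c_iff ij by (metis add.commute linorder_neqE_nat)
          qed
        qed
        then show ?thesis by (intro key) (auto intro!: continuous_intros cont_coord)
      qed
    qed
    then show "y \<in> Aset n u" using yR by (auto simp: Aset_def)
  qed
qed

lemma closed_compat:
  assumes f: "continuous_on UNIV f"
  shows "closed {x. compat a (f x)}"
proof -
  consider "0 < a" | "a < 0" | "a = 0" by linarith
  then show ?thesis
  proof cases
    case 1
    then have "{x. compat a (f x)} = {x. 0 \<le> f x}" by (auto simp: compat_def)
    then show ?thesis using closed_Collect_le[OF continuous_on_const f] by simp
  next
    case 2
    then have "{x. compat a (f x)} = {x. f x \<le> 0}" by (auto simp: compat_def)
    then show ?thesis using closed_Collect_le[OF f continuous_on_const] by simp
  next
    case 3
    then have "{x. compat a (f x)} = {x. f x = 0}" by (auto simp: compat_def)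
    then show ?thesis using closed_Collect_eq[OF f continuous_on_const] by simp
  qed
qed

lemma G_closed: "closed (G n u)"
proof -
  have e1: "G n u = Rn n \<inter> {x. \<forall>i<n. \<forall>j<n. compat (u i - u j) (x i - x j) \<and> compat (u i + u j) (x i + x j)}"
    unfolding G_def by blast
  have e2: "Rn n = (\<Inter>i\<in>{n..}. {x. x i = 0})" unfolding Rn_def by auto
  have e3: "{x. \<forall>i<n. \<forall>j<n. compat (u i - u j) (x i - x j) \<and> compat (u i + u j) (x i + x j)} =
     (\<Inter>i\<in>{..<n}. \<Inter>j\<in>{..<n}. {x. compat (u i - u j) (x i - x j)} \<inter> {x. compat (u i + u j) (x i + x j)})"
    by blast
  have "closed (\<Inter>i\<in>{n..}. {x::nat\<Rightarrow>real. x i = 0})"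
    by (intro closed_INT ballI closed_Collect_eq continuous_on_const cont_coord)
  moreover have "closed (\<Inter>i\<in>{..<n}. \<Inter>j\<in>{..<n}. {x::nat\<Rightarrow>real. compat (u i - u j) (x i - x j)} \<inter> {x. compat (u i + u j) (x i + x j)})"
    by (intro closed_INT ballI closed_Int closed_compat continuous_intros cont_coord)
  ultimately show ?thesis unfolding e1 e2 e3 by (rule closed_Int)
qed

lemma sgn_compat: "sgn b = sgn a \<Longrightarrow> compat a b"
  unfolding compat_def by (auto simp: sgn_if split: if_splits)

lemma compat_comb: "compat a b \<Longrightarrow> 0 < t \<Longrightarrow> t \<le> 1 \<Longrightarrow> sgn ((1 - t) * b + t * a) = sgn a"
proof -
  assume h: "compat a b" "0 < t" "t \<le> 1"
  consider "0 < a" | "a < 0" | "a = 0" by linarith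
  then show ?thesis
  proof cases
    case 1
    then have "0 \<le> b" using h unfolding compat_def by auto
    then have "0 \<le> (1 - t) * b" using h by simp
    moreover have "0 < t * a" using 1 h by simp
    ultimately show ?thesis using 1 by (simp add: sgn_if)
  next
    case 2
    then have "b \<le> 0" using h unfolding compat_def by auto
    then have "(1 - t) * b \<le> 0" using h by (simp add: mult_nonneg_nonpos)
    moreover have "t * a < 0" using 2 h by (simp add: mult_pos_neg)
    ultimately show ?thesis using 2 by (simp add: sgn_if)
  next
    case 3
    then have "b = 0" using h unfolding compat_def by auto
    then show ?thesis using 3 by simp
  qed
qed

lemma closure_Aset:
  assumes u: "u \<in> arr_complement n"
  shows "closure (Aset n u) = G n u"
proof
  have "Aset n u \<subseteq> G n u" by (auto simp: Aset_def G_def intro!: sgn_compat)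
  then show "closure (Aset n u) \<subseteq> G n u" using G_closed closure_minimal by blast
next
  show "G n u \<subseteq> closure (Aset n u)"
  proof
    fix x assume x: "x \<in> G n u"
    define q where "q t = (\<lambda>i. (1 - t) * x i + t * u i)" for t :: real
    have uR: "u \<in> Rn n" using u arr_c_iff by (auto simp: W0_def)
    have qA: "q ` {0<..1} \<subseteq> Aset n u"
    proof
      fix y assume "y \<in> q ` {0<..1}"
      then obtain t where t: "0 < t" "t \<le> 1" "y = q t" by auto
      have "y \<in> Rn n" using uR x t by (auto simp: Rn_def G_def q_def)
      moreover have "sgn (y i - y j) = sgn (u i - u j) \<and> sgn (y i + y j) = sgn (u i + u j)"
        if "i < n" "j < n" for i j
      proof -
        have s: "compat (u i - u j) (x i - x j)" "compat (u i + u j) (x i + x j)"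
          using x that by (auto simp: G_def)
        have "y i - y j = (1 - t) * (x i - x j) + t * (u i - u j)"
             "y i + y j = (1 - t) * (x i + x j) + t * (u i + u j)"
          by (simp_all add: t q_def algebra_simps)
        then show ?thesis using compat_comb[OF s(1) t(1,2)] compat_comb[OF s(2) t(1,2)] by simp
      qed
      ultimately show "y \<in> Aset n u" by (auto simp: Aset_def)
    qed
    have "q ` closure {0<..1} \<subseteq> closure (Aset n u)"
      by (rule image_closure_subset) (use qA closure_subset in \<open>auto simp: q_def intro: cont_seg\<close>)
    moreover have "x = q 0" by (simp add: q_def)
    ultimately show "x \<in> closure (Aset n u)" by auto
  qed
qed

lemma chambers_eq: "chambers n = {G n u | u. u \<in> arr_complement n}"
proof -
  have "closure (connected_component_set (arr_complement n) x) = G n x" if "x \<in> arr_complement n" for x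
    using comp_eq[OF that] closure_Aset[OF that] by simp
  then show ?thesis unfolding chambers_def by auto
qed


definition Nset :: "nat \<Rightarrow> (nat \<Rightarrow> real) set" where
  "Nset n = {v \<in> Wc n. (\<forall>i<n. v i \<in> \<int>) \<and>
     (\<forall>i<n. \<forall>m::nat. 1 \<le> m \<and> real m \<le> \<bar>v i\<bar> \<longrightarrow> (\<exists>j<n. \<bar>v j\<bar> = real m))}"

definition dd :: "nat \<Rightarrow> (nat \<Rightarrow> real) \<Rightarrow> nat" where
  "dd n v = card ((\<lambda>i. \<bar>v i\<bar>) ` {i. i < n \<and> v i \<noteq> 0})"

lemma discrete_ivt:
  fixes h :: "nat \<Rightarrow> nat"
  assumes h0: "h 0 = 0" and hs: "\<And>s. h (Suc s) \<le> h s + 1" and m: "1 \<le> m" "m \<le> h r"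
  shows "\<exists>s. 1 \<le> s \<and> s \<le> r \<and> h s = m"
  using m(2)
proof (induction r)
  case 0 then show ?case using h0 m(1) by simp
next
  case (Suc r)
  show ?case
  proof (cases "m \<le> h r")
    case True then show ?thesis using Suc.IH by (meson le_SucI)
  next
    case False
    then have "h (Suc r) = m" using Suc.prems hs[of r] by linarith
    then show ?thesis by auto
  qed
qed

context chamber
begin

lemma wZ_N:
  assumes uW: "u \<in> Wc n"
  shows "wZ Z \<in> Nset n"
proof -
  have W: "wZ Z \<in> Wc n" using G_Wc[OF uW] wZ_G by blast
  have I: "wZ Z i \<in> \<int>" if "i < n" for i
  proof -
    have "real (card ({1..rk i} - Z)) \<in> \<int>" by (rule Ints_of_nat)
    then show ?thesis using eps_cases[OF that] wZ_val[OF that] by (metis Ints_minus mult_1 mult_minus_left)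
  qed
  have abs_w: "\<bar>wZ Z i\<bar> = card ({1..rk i} - Z)" if "i < n" for i
  proof -
    have "\<bar>eps i\<bar> = 1" using eps_cases[OF that] by auto
    then show ?thesis using wZ_val[OF that] by (simp add: abs_mult)
  qed
  have D: "\<exists>j<n. \<bar>wZ Z j\<bar> = real m" if i: "i < n" and m: "1 \<le> m" "real m \<le> \<bar>wZ Z i\<bar>" for i m
  proof -
    define h where "h s = card ({1..s} - Z)" for s
    have h0: "h 0 = 0" by (simp add: h_def)
    have hs: "h (Suc s) \<le> h s + 1" for s
    proof -
      have "{1..Suc s} - Z \<subseteq> insert (Suc s) ({1..s} - Z)" by auto
      then have "card ({1..Suc s} - Z) \<le> card (insert (Suc s) ({1..s} - Z))" by (intro card_mono) auto
      also have "\<dots> \<le> card ({1..s} - Z) + 1" by (simp add: card_insert_if)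
      finally show ?thesis by (simp add: h_def)
    qed
    have "m \<le> h (rk i)" using m abs_w[OF i] by (simp add: h_def)
    then obtain s where s: "1 \<le> s" "s \<le> rk i" "h s = m" using discrete_ivt[OF h0 hs m(1)] by blast
    have "s \<in> {1..n}" using s rk_le[of i] by auto
    then obtain j where j: "j < n" "rk j = s" using rk_surj by blast
    show ?thesis using j s abs_w[OF j(1)] by (auto simp: h_def)
  qed
  show ?thesis unfolding Nset_def using W I D by blast
qed

lemma eps_v: "v \<in> G n u \<Longrightarrow> i < n \<Longrightarrow> eps i * v i = \<bar>v i\<bar>"
proof -
  assume v: "v \<in> G n u" and i: "i < n"
  have "compat (eps i * u i) (eps i * v i)" using G_signed1[OF v i eps_cases[OF i]] .
  moreover have "0 < eps i * u i" using u_nz[OF i] by (simp add: eps_u)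
  ultimately have "0 \<le> eps i * v i" unfolding compat_def by auto
  then show ?thesis using eps_cases[OF i] by auto
qed

lemma card_phi_nz:
  assumes v: "v \<in> G n u"
  shows "card {t\<in>{1..n}. phi t v \<noteq> 0} = dd n v"
proof -
  define L where "L t = Lv t v" for t
  have L0: "L 0 = 0" by (simp add: L_def Lv_0)
  have Lrk: "i < n \<Longrightarrow> L (rk i) = \<bar>v i\<bar>" for i using Lv_rk eps_v[OF v] by (simp add: L_def)
  have step: "t \<in> {1..n} \<Longrightarrow> L (t - 1) \<le> L t" for t using G_char v by (force simp: phi_def L_def)
  have mono: "s \<le> t \<Longrightarrow> t \<le> n \<Longrightarrow> L s \<le> L t" for s t
  proof (induction t)
    case 0 then show ?case by simp
  next
    case (Suc t)
    then show ?case using step[of "Suc t"] by (cases "s = Suc t") auto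
  qed
  have phiL: "phi t v = L t - L (t - 1)" for t by (simp add: phi_def L_def)
  define T' where "T' = {t\<in>{1..n}. phi t v \<noteq> 0}"
  define V where "V = (\<lambda>i. \<bar>v i\<bar>) ` {i. i < n \<and> v i \<noteq> 0}"
  have "bij_betw L T' V"
  proof (rule bij_betw_imageI)
    show "inj_on L T'"
    proof (rule inj_onI)
      fix s t assume s: "s \<in> T'" and t: "t \<in> T'" and e: "L s = L t"
      show "s = t"
      proof (rule ccontr)
        assume "s \<noteq> t"
        then consider "s < t" | "t < s" by linarith
        then show False
        proof cases
          case 1
          then have "L s \<le> L (t - 1)" using mono[of s "t - 1"] t by (auto simp: T'_def)
          moreover have "L (t - 1) < L t" using step[of t] t by (auto simp: T'_def phiL)
          ultimately show False using e by simp
        next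
          case 2
          then have "L t \<le> L (s - 1)" using mono[of t "s - 1"] s by (auto simp: T'_def)
          moreover have "L (s - 1) < L s" using step[of s] s by (auto simp: T'_def phiL)
          ultimately show False using e by simp
        qed
      qed
    qed
    show "L ` T' = V"
    proof
      show "L ` T' \<subseteq> V"
      proof
        fix y assume "y \<in> L ` T'"
        then obtain t where t: "t \<in> T'" "y = L t" by auto
        then have t1: "t \<in> {1..n}" by (simp add: T'_def)
        obtain i where i: "i < n" "rk i = t" using rk_surj[OF t1] by auto
        have "L (t - 1) < L t" using step[OF t1] t by (auto simp: T'_def phiL)
        moreover have "0 \<le> L (t - 1)" using mono[of 0 "t - 1"] L0 t1 by auto
        ultimately have "v i \<noteq> 0" using Lrk[OF i(1)] i by auto
        then show "y \<in> V" using t i Lrk by (auto simp: V_def)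
      qed
      show "V \<subseteq> L ` T'"
      proof
        fix y assume "y \<in> V"
        then obtain i where i: "i < n" "v i \<noteq> 0" "y = \<bar>v i\<bar>" by (auto simp: V_def)
        have ex: "\<exists>t. y \<le> L t \<and> t \<le> rk i" using Lrk[OF i(1)] i by (intro exI[of _ "rk i"]) simp
        define t where "t = (LEAST t. y \<le> L t \<and> t \<le> rk i)"
        have t: "y \<le> L t" "t \<le> rk i" using LeastI_ex[OF ex] by (simp_all add: t_def)
        have tmin: "\<And>s. y \<le> L s \<and> s \<le> rk i \<Longrightarrow> t \<le> s" unfolding t_def by (rule Least_le)
        have ypos: "0 < y" using i by simp
        have t1: "1 \<le> t" using t L0 ypos by (cases t) auto
        have tn: "t \<le> n" using t rk_le[of i] by simp
        have "L (t - 1) < y"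
        proof (rule ccontr)
          assume "\<not> L (t - 1) < y"
          then have "t \<le> t - 1" using tmin[of "t - 1"] t by auto
          then show False using t1 by simp
        qed
        moreover have "L t \<le> y" using mono[OF t(2) rk_le] Lrk[OF i(1)] i by simp
        ultimately have "L t = y" "phi t v \<noteq> 0" using t by (auto simp: phiL)
        then show "y \<in> L ` T'" using t1 tn by (auto simp: T'_def)
      qed
    qed
  qed
  then have "card T' = card V" by (rule bij_betw_same_card)
  then show ?thesis by (simp add: T'_def V_def dd_def)
qed

end

definition pert :: "nat \<Rightarrow> (nat \<Rightarrow> real) \<Rightarrow> nat \<Rightarrow> real" where
  "pert n v = (\<lambda>i. if i < n then v i + real (n - i) / real (4 * n) else 0)"

lemma int_ne0: "(x::real) \<in> \<int> \<Longrightarrow> x \<noteq> 0 \<Longrightarrow> 1 \<le> \<bar>x\<bar>"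
  by (rule Ints_nonzero_abs_ge1)

lemma compat_pert: "1 \<le> \<bar>A::real\<bar> \<Longrightarrow> \<bar>D\<bar> \<le> 1/2 \<Longrightarrow> P = A + D \<Longrightarrow> compat P A"
  unfolding compat_def by (auto simp: abs_if split: if_splits)

lemma delta_bounds:
  assumes "i < n"
  shows "0 < real (n - i) / real (4 * n)" "real (n - i) / real (4 * n) \<le> 1/4"
proof -
  have n: "0 < real n" using assms by simp
  show "0 < real (n - i) / real (4 * n)" using assms by simp
  have "real (n - i) \<le> real n" by simp
  then show "real (n - i) / real (4 * n) \<le> 1/4" using n by (simp add: field_simps)
qed

lemma delta_strict:
  assumes "i < j" "j < n"
  shows "real (n - j) / real (4 * n) < real (n - i) / real (4 * n)"
proof -
  have "real (n - j) < real (n - i)" using assms by simp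
  moreover have "0 < real (4 * n)" using assms by simp
  ultimately show ?thesis by (simp add: divide_strict_right_mono)
qed

lemma pert_arr:
  assumes v: "v \<in> Nset n"
  shows "pert n v \<in> arr_complement n" "v \<in> G n (pert n v)"
proof -
  define d where "d i = real (n - i) / real (4 * n)" for i
  have vW: "v \<in> Wc n" and vI: "\<And>i. i < n \<Longrightarrow> v i \<in> \<int>" using v by (auto simp: Nset_def)
  have vR: "v \<in> Rn n" using vW by (simp add: Wc_def)
  have pv: "i < n \<Longrightarrow> pert n v i = v i + d i" for i by (simp add: pert_def d_def)
  have dpos: "i < n \<Longrightarrow> 0 < d i" and dle: "i < n \<Longrightarrow> d i \<le> 1/4" for i
    using delta_bounds by (auto simp: d_def)
  have dstr: "i < j \<Longrightarrow> j < n \<Longrightarrow> d j < d i" for i j using delta_strict by (simp add: d_def)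
  have pR: "pert n v \<in> Rn n" by (simp add: pert_def Rn_def)
  have W0: "pert n v \<in> W0 n"
  proof -
    have "pert n v j < pert n v i" if ij: "i < j" "j < n" for i j
    proof -
      have "v j \<le> v i" using vW ij by (auto simp: Wc_def)
      moreover have "v i - v j \<in> \<int>" using vI ij by auto
      ultimately have "v i = v j \<or> 1 \<le> v i - v j" using int_ne0[of "v i - v j"] by auto
      then show ?thesis using pv ij dstr[OF ij] dpos dle by auto
    qed
    then show ?thesis using pR by (auto simp: W0_def)
  qed
  have nz: "pert n v i \<noteq> 0" if i: "i < n" for i
  proof -
    have "v i = 0 \<or> 1 \<le> \<bar>v i\<bar>" using int_ne0 vI[OF i] by auto
    then show ?thesis using pv[OF i] dpos[OF i] dle[OF i] by auto
  qed
  have sm: "pert n v i + pert n v j \<noteq> 0" if ij: "i < j" "j < n" for i j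
  proof -
    have i: "i < n" using ij by simp
    have "v i + v j = 0 \<or> 1 \<le> \<bar>v i + v j\<bar>" using int_ne0[of "v i + v j"] vI[OF i] vI[OF ij(2)] by auto
    then show ?thesis using pv[OF i] pv[OF ij(2)] dpos[OF i] dle[OF i] dpos[OF ij(2)] dle[OF ij(2)] by auto
  qed
  show "pert n v \<in> arr_complement n" using W0 nz sm arr_c_iff by blast
  have c: "compat (pert n v i - e * pert n v j) (v i - e * v j)" if ij: "i < n" "j < n" "e = 1 \<or> e = -1" for i j e
  proof (cases "v i - e * v j = 0")
    case True then show ?thesis by simp
  next
    case False
    have "v i - e * v j \<in> \<int>" using vI ij by auto
    then have a: "1 \<le> \<bar>v i - e * v j\<bar>" using int_ne0 False by blast
    have "pert n v i - e * pert n v j = (v i - e * v j) + (d i - e * d j)" using pv ij by (simp add: algebra_simps)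
    moreover have "\<bar>d i - e * d j\<bar> \<le> 1/2"
    proof -
      have "0 < d i" "d i \<le> 1/4" "0 < d j" "d j \<le> 1/4" using ij dpos dle by auto
      then show ?thesis using ij(3) by (auto simp: abs_if)
    qed
    ultimately show ?thesis using a compat_pert by metis
  qed
  show "v \<in> G n (pert n v)"
    using c[of _ _ 1] c[of _ _ "-1"] vR by (simp add: G_def)
qed

lemma arr_Wc: "u \<in> arr_complement n \<Longrightarrow> u \<in> Wc n"
  using arr_c_iff W0_Wc by blast

lemma faces_sub: "faces n \<subseteq> G n ` Nset n"
proof
  fix F assume "F \<in> faces n"
  then consider "F \<in> chambers n" | C H where "F = C \<inter> H" "C \<in> chambers n" "supporting_hyperplane n C H"
    unfolding faces_def by blast
  then show "F \<in> G n ` Nset n"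
  proof cases
    case 1
    then obtain u where u: "u \<in> arr_complement n" "F = G n u" using chambers_eq by blast
    interpret chamber n u using arr_chamber[OF u(1)] .
    have "G n (wZ {}) = G n u" using face_wZ[of "{}"] by simp
    then show ?thesis using wZ_N[OF arr_Wc[OF u(1)]] u by (metis image_eqI)
  next
    case 2
    then obtain u where u: "u \<in> arr_complement n" "C = G n u" using chambers_eq by blast
    interpret chamber n u using arr_chamber[OF u(1)] .
    obtain a b where ab: "H = {x \<in> Rn n. (\<Sum>i<n. a i * x i) = b}"
      "C \<subseteq> {x. (\<Sum>i<n. a i * x i) \<le> b}" "C \<inter> H \<noteq> {}"
      using 2(3) unfolding supporting_hyperplane_def by blast
    have "F = G n (wZ {t\<in>{1..n}. (\<Sum>i<n. a i * rho t i) < 0})"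
      using supp_face[of a b] ab u 2(1) by simp
    then show ?thesis using wZ_N[OF arr_Wc[OF u(1)]] by blast
  qed
qed

lemma faces_sup: "G n ` Nset n \<subseteq> faces n"
proof
  fix F assume "F \<in> G n ` Nset n"
  then obtain v where v: "v \<in> Nset n" "F = G n v" by auto
  define u where "u = pert n v"
  have u: "u \<in> arr_complement n" "v \<in> G n u" using pert_arr[OF v(1)] by (simp_all add: u_def)
  interpret chamber n u using arr_chamber[OF u(1)] .
  define Z where "Z = {t\<in>{1..n}. phi t v = 0}"
  have Fe: "F = {x \<in> G n u. \<forall>t\<in>Z. phi t x = 0}" using face[OF u(2)] v(2) by (auto simp: Z_def)
  have ch: "G n u \<in> chambers n" using chambers_eq u(1) by blast
  show "F \<in> faces n"
  proof (cases "Z = {}")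
    case True
    then have "F = G n u" using Fe by simp
    then show ?thesis using ch by (simp add: faces_def)
  next
    case False
    obtain a where a: "\<exists>i<n. a i \<noteq> 0" "G n u \<subseteq> {x. (\<Sum>i<n. a i * x i) \<le> 0}"
      "G n u \<inter> {x\<in>Rn n. (\<Sum>i<n. a i * x i) = 0} = {x\<in>G n u. \<forall>t\<in>Z. phi t x = 0}"
    proof -
      have "Z \<subseteq> {1..n}" by (auto simp: Z_def)
      from face_supp[OF this False] show ?thesis using that by blast
    qed
    have "supporting_hyperplane n (G n u) {x\<in>Rn n. (\<Sum>i<n. a i * x i) = 0}"
    proof -
      have "(0::nat\<Rightarrow>real) \<in> G n u \<inter> {x\<in>Rn n. (\<Sum>i<n. a i * x i) = 0}" by simp
      then show ?thesis unfolding supporting_hyperplane_def using a(1,2)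
        by (intro exI[of _ a] exI[of _ 0]) blast
    qed
    then show ?thesis using ch a(3) Fe unfolding faces_def by blast
  qed
qed

lemma faces_eq: "faces n = G n ` Nset n"
  using faces_sub faces_sup by blast

lemma dim_eq:
  assumes v: "v \<in> Nset n"
  shows "span_dim (G n v) = dd n v"
proof -
  have u: "pert n v \<in> arr_complement n" "v \<in> G n (pert n v)" using pert_arr[OF v] by simp_all
  interpret chamber n "pert n v" using arr_chamber[OF u(1)] .
  show ?thesis using span_dim_face[OF u(2)] card_phi_nz[OF u(2)] by simp
qed


lemma compat_sgn: "compat a b \<Longrightarrow> compat b a \<Longrightarrow> sgn a = sgn b"
  unfolding compat_def by (auto simp: sgn_if)

lemma abs_le_sgn: "\<bar>b::real\<bar> \<le> \<bar>a\<bar> \<longleftrightarrow> 0 \<le> sgn (a - b) * sgn (a + b)"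
proof -
  have "\<bar>b\<bar> \<le> \<bar>a\<bar> \<longleftrightarrow> b^2 \<le> a^2" by (simp add: abs_le_square_iff)
  also have "\<dots> \<longleftrightarrow> 0 \<le> (a - b) * (a + b)" by (simp add: algebra_simps power2_eq_square)
  also have "\<dots> \<longleftrightarrow> 0 \<le> sgn ((a - b) * (a + b))" by (simp add: sgn_if)
  also have "sgn ((a - b) * (a + b)) = sgn (a - b) * sgn (a + b)" by (rule sgn_mult)
  finally show ?thesis .
qed

lemma abs_eq_sgn: "\<bar>b::real\<bar> = \<bar>a\<bar> \<longleftrightarrow> sgn (a - b) * sgn (a + b) = 0"
proof -
  have "\<bar>b\<bar> = \<bar>a\<bar> \<longleftrightarrow> (a - b) * (a + b) = 0"
    by (auto simp: abs_eq_iff algebra_simps) (metis add.inverse_inverse add_eq_0_iff2 eq_iff_diff_eq_0 mult_eq_0_iff square_diff_square_factored)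
  also have "\<dots> \<longleftrightarrow> sgn ((a - b) * (a + b)) = 0" by (simp only: sgn_eq_0_iff)
  also have "sgn ((a - b) * (a + b)) = sgn (a - b) * sgn (a + b)" by (rule sgn_mult)
  finally show ?thesis .
qed

lemma card_image_kernel:
  assumes "\<And>j k. j \<in> J \<Longrightarrow> k \<in> J \<Longrightarrow> f j = f k \<longleftrightarrow> gg j = gg k"
  shows "card (f ` J) = card (gg ` J)"
proof -
  define h where "h y = f (inv_into J gg y)" for y
  have hg: "j \<in> J \<Longrightarrow> h (gg j) = f j" for j
  proof -
    assume j: "j \<in> J"
    have "gg j \<in> gg ` J" using j by simp
    then have "inv_into J gg (gg j) \<in> J" "gg (inv_into J gg (gg j)) = gg j"
      by (auto intro: inv_into_into f_inv_into_f)
    then show ?thesis using assms j by (simp add: h_def)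
  qed
  have "h ` (gg ` J) = f ` J" using hg by (auto simp: image_iff)
  moreover have "inj_on h (gg ` J)"
  proof (rule inj_onI)
    fix y z assume "y \<in> gg ` J" "z \<in> gg ` J" "h y = h z"
    then obtain j k where "j \<in> J" "k \<in> J" "y = gg j" "z = gg k" "f j = f k" using hg by auto
    then show "y = z" using assms by auto
  qed
  ultimately show ?thesis using card_image by metis
qed

lemma Nset_abs_count:
  assumes v: "v \<in> Nset n" and i: "i < n"
  shows "\<bar>v i\<bar> = card ((\<lambda>j. \<bar>v j\<bar>) ` {j. j < n \<and> v j \<noteq> 0 \<and> \<bar>v j\<bar> \<le> \<bar>v i\<bar>})"
proof -
  have vI: "\<And>j. j < n \<Longrightarrow> v j \<in> \<int>" using v by (auto simp: Nset_def)
  have absI: "\<And>j. j < n \<Longrightarrow> \<exists>m::nat. \<bar>v j\<bar> = real m"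
  proof -
    fix j assume "j < n"
    then obtain z where "v j = of_int z" using vI by (auto elim: Ints_cases)
    then have "\<bar>v j\<bar> = real (nat \<bar>z\<bar>)" by simp
    then show "\<exists>m::nat. \<bar>v j\<bar> = real m" by blast
  qed
  obtain m :: nat where m: "\<bar>v i\<bar> = real m" using absI[OF i] by blast
  have "(\<lambda>j. \<bar>v j\<bar>) ` {j. j < n \<and> v j \<noteq> 0 \<and> \<bar>v j\<bar> \<le> \<bar>v i\<bar>} = real ` {1..m}"
  proof
    show "(\<lambda>j. \<bar>v j\<bar>) ` {j. j < n \<and> v j \<noteq> 0 \<and> \<bar>v j\<bar> \<le> \<bar>v i\<bar>} \<subseteq> real ` {1..m}"
    proof
      fix y assume "y \<in> (\<lambda>j. \<bar>v j\<bar>) ` {j. j < n \<and> v j \<noteq> 0 \<and> \<bar>v j\<bar> \<le> \<bar>v i\<bar>}"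
      then obtain j where j: "j < n" "v j \<noteq> 0" "\<bar>v j\<bar> \<le> \<bar>v i\<bar>" "y = \<bar>v j\<bar>" by auto
      obtain k :: nat where k: "\<bar>v j\<bar> = real k" using absI[OF j(1)] by blast
      have "1 \<le> k" using k j(2) by (cases k) auto
      moreover have "k \<le> m" using k m j(3) by simp
      ultimately show "y \<in> real ` {1..m}" using j k by auto
    qed
    show "real ` {1..m} \<subseteq> (\<lambda>j. \<bar>v j\<bar>) ` {j. j < n \<and> v j \<noteq> 0 \<and> \<bar>v j\<bar> \<le> \<bar>v i\<bar>}"
    proof
      fix y assume "y \<in> real ` {1..m}"
      then obtain k where k: "1 \<le> k" "k \<le> m" "y = real k" by auto
      have "real k \<le> \<bar>v i\<bar>" using k m by simp
      then obtain j where j: "j < n" "\<bar>v j\<bar> = real k" using v i k(1) unfolding Nset_def by blast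
      have "v j \<noteq> 0" using j k(1) by auto
      then show "y \<in> (\<lambda>j. \<bar>v j\<bar>) ` {j. j < n \<and> v j \<noteq> 0 \<and> \<bar>v j\<bar> \<le> \<bar>v i\<bar>}"
        using j k m by (intro image_eqI[of _ _ j]) auto
    qed
  qed
  moreover have "card (real ` {1..m}) = m" by (simp add: card_image)
  ultimately show ?thesis using m by simp
qed

lemma pattern_eq:
  assumes v: "v \<in> Nset n" and w: "w \<in> Nset n"
    and p: "\<And>i j. i < n \<Longrightarrow> j < n \<Longrightarrow> sgn (v i - v j) = sgn (w i - w j) \<and> sgn (v i + v j) = sgn (w i + w j)"
  shows "v = w"
proof
  fix i
  show "v i = w i"
  proof (cases "i < n")
    case False
    then show ?thesis using v w by (auto simp: Nset_def Wc_def Rn_def)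
  next
    case True
    define J where "J = {j. j < n \<and> v j \<noteq> 0 \<and> \<bar>v j\<bar> \<le> \<bar>v i\<bar>}"
    have nz: "j < n \<Longrightarrow> v j \<noteq> 0 \<longleftrightarrow> w j \<noteq> 0" for j
      using p[of j j] by (auto simp: sgn_if split: if_splits)
    have le: "j < n \<Longrightarrow> \<bar>v j\<bar> \<le> \<bar>v i\<bar> \<longleftrightarrow> \<bar>w j\<bar> \<le> \<bar>w i\<bar>" for j
      using p[OF True, of j] abs_le_sgn[of "v j" "v i"] abs_le_sgn[of "w j" "w i"] by simp
    have J: "J = {j. j < n \<and> w j \<noteq> 0 \<and> \<bar>w j\<bar> \<le> \<bar>w i\<bar>}" using nz le by (auto simp: J_def)
    have ker: "j \<in> J \<Longrightarrow> k \<in> J \<Longrightarrow> \<bar>v j\<bar> = \<bar>v k\<bar> \<longleftrightarrow> \<bar>w j\<bar> = \<bar>w k\<bar>" for j k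
      using p[of k j] abs_eq_sgn[of "v j" "v k"] abs_eq_sgn[of "w j" "w k"] by (auto simp: J_def)
    have "\<bar>v i\<bar> = card ((\<lambda>j. \<bar>v j\<bar>) ` J)" using Nset_abs_count[OF v True] by (simp add: J_def)
    also have "card ((\<lambda>j. \<bar>v j\<bar>) ` J) = card ((\<lambda>j. \<bar>w j\<bar>) ` J)" by (rule card_image_kernel) (rule ker)
    also have "\<dots> = \<bar>w i\<bar>" using Nset_abs_count[OF w True] by (simp add: J)
    finally have a: "\<bar>v i\<bar> = \<bar>w i\<bar>" .
    have "sgn (v i + v i) = sgn (w i + w i)" using p[OF True True] by simp
    then have "sgn (v i) = sgn (w i)" by (simp add: sgn_mult[of 2, simplified mult_2[symmetric]] mult_2[symmetric])
    then show ?thesis using a by (metis sgn_mult_abs)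
  qed
qed

lemma G_inj: "inj_on (G n) (Nset n)"
proof (rule inj_onI)
  fix v w assume v: "v \<in> Nset n" and w: "w \<in> Nset n" and e: "G n v = G n w"
  have vR: "v \<in> Rn n" and wR: "w \<in> Rn n" using v w by (auto simp: Nset_def Wc_def)
  have vw: "v \<in> G n w" using G_self[OF vR] e by simp
  have wv: "w \<in> G n v" using G_self[OF wR] e by simp
  show "v = w"
  proof (rule pattern_eq[OF v w])
    fix i j assume ij: "i < n" "j < n"
    have "compat (v i - v j) (w i - w j)" "compat (w i - w j) (v i - v j)"
      "compat (v i + v j) (w i + w j)" "compat (w i + w j) (v i + v j)"
      using vw wv ij by (auto simp: G_def)
    then show "sgn (v i - v j) = sgn (w i - w j) \<and> sgn (v i + v j) = sgn (w i + w j)"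
      using compat_sgn by blast
  qed
qed

lemma g_count: "g n k = card {v \<in> Nset n. dd n v = k}"
proof -
  have "{F \<in> faces n. span_dim F = k} = G n ` {v \<in> Nset n. dd n v = k}"
    unfolding faces_eq using dim_eq by auto
  moreover have "inj_on (G n) {v \<in> Nset n. dd n v = k}"
    using G_inj by (rule inj_on_subset) auto
  ultimately show ?thesis unfolding g_def by (simp add: card_image)
qed


definition MS :: "nat \<Rightarrow> nat \<Rightarrow> int multiset set" where
  "MS n k = {M. size M = n \<and> (\<forall>x\<in>#M. \<bar>x\<bar> \<le> int k) \<and> (\<forall>m. 1 \<le> m \<and> m \<le> k \<longrightarrow> int m \<in># M \<or> - int m \<in># M)}"

definition Lf :: "nat \<Rightarrow> (nat \<Rightarrow> real) \<Rightarrow> int list" where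
  "Lf n v = map (\<lambda>i. \<lfloor>v i\<rfloor>) [0..<n]"

lemma Nset_int: "v \<in> Nset n \<Longrightarrow> i < n \<Longrightarrow> real_of_int \<lfloor>v i\<rfloor> = v i"
  unfolding Nset_def by (auto elim!: Ints_cases)

lemma Nset_absnat: "v \<in> Nset n \<Longrightarrow> i < n \<Longrightarrow> \<exists>m::nat. \<bar>v i\<bar> = real m"
proof -
  assume v: "v \<in> Nset n" and i: "i < n"
  have "\<bar>v i\<bar> = real (nat \<bar>\<lfloor>v i\<rfloor>\<bar>)" using Nset_int[OF v i] by (metis of_int_abs of_nat_nat abs_ge_zero of_int_of_nat_eq)
  then show ?thesis by blast
qed

lemma Nset_V:
  assumes v: "v \<in> Nset n"
  shows "(\<lambda>i. \<bar>v i\<bar>) ` {i. i < n \<and> v i \<noteq> 0} = real ` {1..dd n v}"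
proof -
  define V where "V = (\<lambda>i. \<bar>v i\<bar>) ` {i. i < n \<and> v i \<noteq> 0}"
  have finV: "finite V" unfolding V_def by (rule finite_imageI) (rule finite_subset[of _ "{..<n}"], auto)
  have "\<exists>m. V = real ` {1..m}"
  proof (cases "V = {}")
    case True then show ?thesis by (intro exI[of _ 0]) simp
  next
    case False
    define M where "M = Max V"
    have MV: "M \<in> V" using finV False by (simp add: M_def)
    then obtain i0 where i0: "i0 < n" "v i0 \<noteq> 0" "M = \<bar>v i0\<bar>" by (auto simp: V_def)
    obtain m :: nat where m: "M = real m" using Nset_absnat[OF v i0(1)] i0 by auto
    have "V = real ` {1..m}"
    proof
      show "V \<subseteq> real ` {1..m}"
      proof
        fix y assume y: "y \<in> V"
        then obtain i where i: "i < n" "v i \<noteq> 0" "y = \<bar>v i\<bar>" by (auto simp: V_def)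
        obtain k :: nat where k: "\<bar>v i\<bar> = real k" using Nset_absnat[OF v i(1)] by auto
        have "1 \<le> k" using k i(2) by (cases k) auto
        moreover have "y \<le> M" using y finV by (simp add: M_def)
        ultimately show "y \<in> real ` {1..m}" using i k m by auto
      qed
      show "real ` {1..m} \<subseteq> V"
      proof
        fix y assume "y \<in> real ` {1..m}"
        then obtain k where k: "1 \<le> k" "k \<le> m" "y = real k" by auto
        have "real k \<le> \<bar>v i0\<bar>" using k m i0 by simp
        then obtain j where j: "j < n" "\<bar>v j\<bar> = real k" using v i0(1) k(1) unfolding Nset_def by blast
        then show "y \<in> V" using k by (auto simp: V_def intro!: image_eqI[of _ _ j])
      qed
    qed
    then show ?thesis by blast
  qed
  then obtain m where m: "V = real ` {1..m}" by blast
  have "dd n v = m" using m by (simp add: dd_def V_def[symmetric] card_image)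
  then show ?thesis using m by (simp add: V_def)
qed

lemma Lf_nth: "i < n \<Longrightarrow> Lf n v ! i = \<lfloor>v i\<rfloor>"
  by (simp add: Lf_def)

lemma Lf_len[simp]: "length (Lf n v) = n"
  by (simp add: Lf_def)

lemma Lf_sorted: "v \<in> Nset n \<Longrightarrow> sorted (rev (Lf n v))"
  unfolding sorted_rev_iff_nth_mono
  by (auto simp: Lf_nth Nset_def Wc_def intro: floor_mono)

lemma Lf_MS:
  assumes v: "v \<in> Nset n"
  shows "mset (Lf n v) \<in> MS n (dd n v)"
proof -
  have V: "(\<lambda>i. \<bar>v i\<bar>) ` {i. i < n \<and> v i \<noteq> 0} = real ` {1..dd n v}" using Nset_V[OF v] .
  have "\<bar>x\<bar> \<le> int (dd n v)" if "x \<in># mset (Lf n v)" for x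
  proof -
    have "x \<in> set (Lf n v)" using that by simp
    then obtain i where i: "i < n" "x = \<lfloor>v i\<rfloor>" unfolding Lf_def by auto
    have vi: "v i = real_of_int x" unfolding i(2) using Nset_int[OF v i(1)] by (rule sym)
    show ?thesis
    proof (cases "v i = 0")
      case True then show ?thesis using vi by simp
    next
      case False
      then have "\<bar>v i\<bar> \<in> real ` {1..dd n v}" using V[symmetric] i by blast
      then have "\<bar>v i\<bar> \<le> real (dd n v)" by auto
      then have "real_of_int \<bar>x\<bar> \<le> real_of_int (int (dd n v))" using vi by simp
      then show ?thesis by (simp only: of_int_le_iff)
    qed
  qed
  moreover have "int m \<in># mset (Lf n v) \<or> - int m \<in># mset (Lf n v)" if m: "1 \<le> m" "m \<le> dd n v" for m
  proof -
    have "real m \<in> real ` {1..dd n v}" using m by auto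
    then have "real m \<in> (\<lambda>i. \<bar>v i\<bar>) ` {i. i < n \<and> v i \<noteq> 0}" using V by simp
    then obtain i where i: "i < n" "\<bar>v i\<bar> = real m" by auto
    have "v i = real m \<or> v i = - real m" using i(2) by (cases "0 \<le> v i") auto
    then have "\<lfloor>v i\<rfloor> = int m \<or> \<lfloor>v i\<rfloor> = - int m"
    proof
      assume "v i = real m" then show ?thesis by simp
    next
      assume "v i = - real m"
      then have "v i = real_of_int (- int m)" by simp
      then have "\<lfloor>v i\<rfloor> = - int m" by (simp only: floor_of_int)
      then show ?thesis by simp
    qed
    moreover have "\<lfloor>v i\<rfloor> \<in># mset (Lf n v)" using i by (auto simp: Lf_def)
    ultimately show ?thesis by auto
  qed
  ultimately show ?thesis by (auto simp: MS_def Lf_def)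
qed

lemma Lf_inj: "inj_on (\<lambda>v. mset (Lf n v)) (Nset n)"
proof (rule inj_onI)
  fix v w assume v: "v \<in> Nset n" and w: "w \<in> Nset n" and e: "mset (Lf n v) = mset (Lf n w)"
  have "sort (rev (Lf n w)) = rev (Lf n v)"
    by (rule properties_for_sort) (use e Lf_sorted[OF v] in auto)
  moreover have "sort (rev (Lf n w)) = rev (Lf n w)" using Lf_sorted[OF w] by (rule sorted_sort_id)
  ultimately have L: "Lf n v = Lf n w" by simp
  show "v = w"
  proof
    fix i show "v i = w i"
    proof (cases "i < n")
      case True
      then have "\<lfloor>v i\<rfloor> = \<lfloor>w i\<rfloor>" using L Lf_nth by metis
      then show ?thesis using Nset_int[OF v True] Nset_int[OF w True] by metis
    next
      case False then show ?thesis using v w by (auto simp: Nset_def Wc_def Rn_def)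
    qed
  qed
qed

lemma MS_Lf:
  assumes M: "M \<in> MS n k"
  shows "\<exists>v\<in>Nset n. dd n v = k \<and> mset (Lf n v) = M"
proof -
  define xs where "xs = rev (sorted_list_of_multiset M)"
  have len: "length xs = n" using M by (simp add: xs_def MS_def flip: size_mset)
  have mxs: "mset xs = M" by (simp add: xs_def)
  have sxs: "sorted (rev xs)" by (simp add: xs_def)
  define v where "v i = (if i < n then real_of_int (xs ! i) else 0)" for i
  have bound: "\<And>i. i < n \<Longrightarrow> \<bar>xs ! i\<bar> \<le> int k"
    using M len mxs by (auto simp: MS_def)
  have cover: "\<And>m. 1 \<le> m \<Longrightarrow> m \<le> k \<Longrightarrow> \<exists>j<n. xs ! j = int m \<or> xs ! j = - int m"
  proof -
    fix m assume "1 \<le> m" "m \<le> k"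
    then have "int m \<in> set xs \<or> - int m \<in> set xs" using M mxs by (auto simp: MS_def)
    then show "\<exists>j<n. xs ! j = int m \<or> xs ! j = - int m" using len by (auto simp: in_set_conv_nth)
  qed
  have vR: "v \<in> Rn n" by (simp add: v_def Rn_def)
  have vW: "v \<in> Wc n"
    using vR sorted_rev_nth_mono[OF sxs] len by (auto simp: Wc_def v_def)
  have vN: "v \<in> Nset n"
  proof -
    have "\<exists>j<n. \<bar>v j\<bar> = real m" if i: "i < n" and m: "1 \<le> m" "real m \<le> \<bar>v i\<bar>" for i m
    proof -
      have "m \<le> k" using bound[OF i] m by (simp add: v_def i)
      then obtain j where j: "j < n" "xs ! j = int m \<or> xs ! j = - int m" using cover m(1) by blast
      then show ?thesis by (intro exI[of _ j]) (auto simp: v_def)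
    qed
    then show ?thesis using vW by (auto simp: Nset_def v_def)
  qed
  have V: "(\<lambda>i. \<bar>v i\<bar>) ` {i. i < n \<and> v i \<noteq> 0} = real ` {1..k}"
  proof
    show "(\<lambda>i. \<bar>v i\<bar>) ` {i. i < n \<and> v i \<noteq> 0} \<subseteq> real ` {1..k}"
    proof
      fix y assume "y \<in> (\<lambda>i. \<bar>v i\<bar>) ` {i. i < n \<and> v i \<noteq> 0}"
      then obtain i where i: "i < n" "xs ! i \<noteq> 0" "y = real_of_int \<bar>xs ! i\<bar>" by (auto simp: v_def)
      have y: "y = real (nat \<bar>xs ! i\<bar>)" using i by simp
      have N: "nat \<bar>xs ! i\<bar> \<in> {1..k}" using i bound[OF i(1)] by auto
      show "y \<in> real ` {1..k}" by (rule rev_image_eqI[where f=real, OF N y])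
    qed
    show "real ` {1..k} \<subseteq> (\<lambda>i. \<bar>v i\<bar>) ` {i. i < n \<and> v i \<noteq> 0}"
    proof
      fix y assume "y \<in> real ` {1..k}"
      then obtain m where m: "1 \<le> m" "m \<le> k" "y = real m" by auto
      obtain j where j: "j < n" "xs ! j = int m \<or> xs ! j = - int m" using cover m by blast
      then have "v j \<noteq> 0" "\<bar>v j\<bar> = y" using m by (auto simp: v_def)
      then show "y \<in> (\<lambda>i. \<bar>v i\<bar>) ` {i. i < n \<and> v i \<noteq> 0}" using j by auto
    qed
  qed
  have dd: "dd n v = k" by (simp add: dd_def V card_image)
  have "Lf n v = xs"
  proof -
    have "Lf n v = map (\<lambda>i. xs ! i) [0..<n]" by (simp add: Lf_def v_def)
    then show ?thesis using map_nth[of xs] len by simp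
  qed
  then show ?thesis using vN dd mxs by auto
qed

lemma count_MS: "card {v \<in> Nset n. dd n v = k} = card (MS n k)"
proof -
  have "(\<lambda>v. mset (Lf n v)) ` {v \<in> Nset n. dd n v = k} = MS n k"
    using Lf_MS MS_Lf by fastforce
  moreover have "inj_on (\<lambda>v. mset (Lf n v)) {v \<in> Nset n. dd n v = k}"
    using Lf_inj by (rule inj_on_subset) auto
  ultimately show ?thesis by (metis card_image)
qed


lemma MS_0: "MS n 0 = {replicate_mset n 0}"
proof
  show "MS n 0 \<subseteq> {replicate_mset n 0}"
  proof
    fix M assume M: "M \<in> MS n 0"
    then have "set_mset M \<subseteq> {0}" by (auto simp: MS_def)
    then have "M = replicate_mset (size M) 0" by (rule set_mset_subset_singletonD)
    then show "M \<in> {replicate_mset n 0}" using M by (simp add: MS_def)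
  qed
  show "{replicate_mset n 0} \<subseteq> MS n 0" by (auto simp: MS_def)
qed

lemma finite_MS: "finite (MS n k)"
proof -
  have "MS n k \<subseteq> mset ` {xs. set xs \<subseteq> {- int k..int k} \<and> length xs = n}"
  proof
    fix M assume M: "M \<in> MS n k"
    define xs where "xs = sorted_list_of_multiset M"
    have "set xs \<subseteq> {- int k..int k}" using M by (auto simp: xs_def MS_def abs_le_iff)
    moreover have "length xs = n" using M by (simp add: xs_def MS_def flip: size_mset)
    moreover have "mset xs = M" by (simp add: xs_def)
    ultimately show "M \<in> mset ` {xs. set xs \<subseteq> {- int k..int k} \<and> length xs = n}" by blast
  qed
  moreover have "finite {xs. set xs \<subseteq> {- int k..int k} \<and> length xs = n}"
    by (rule finite_lists_length_eq) simp
  ultimately show ?thesis by (meson finite_imageI finite_subset)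
qed

definition ext :: "nat \<Rightarrow> nat \<Rightarrow> nat \<times> nat \<times> int multiset \<Rightarrow> int multiset" where
  "ext n k = (\<lambda>(j, a, M'). M' + replicate_mset a (int (Suc k)) + replicate_mset (n - j - a) (- int (Suc k)))"

lemma MS_Suc_bij:
  "bij_betw (ext n k) (SIGMA j:{..<n}. SIGMA a:{0..n-j}. MS j k) (MS n (Suc k))"
proof (rule bij_betwI')
  define K where "K = int (Suc k)"
  have noK: "M' \<in> MS j k \<Longrightarrow> count M' K = 0 \<and> count M' (- K) = 0" for M' j
  proof -
    assume "M' \<in> MS j k"
    then have "K \<notin># M'" "- K \<notin># M'" by (auto simp: MS_def K_def)
    then show ?thesis by (simp add: not_in_iff)
  qed
  show "ext n k x = ext n k y \<longleftrightarrow> x = y"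
    if x: "x \<in> (SIGMA j:{..<n}. SIGMA a:{0..n-j}. MS j k)" and y: "y \<in> (SIGMA j:{..<n}. SIGMA a:{0..n-j}. MS j k)" for x y
  proof
    assume e: "ext n k x = ext n k y"
    obtain j a M where xd: "x = (j, a, M)" "j < n" "a \<le> n - j" "M \<in> MS j k" using x by auto
    obtain j' a' M' where yd: "y = (j', a', M')" "j' < n" "a' \<le> n - j'" "M' \<in> MS j' k" using y by auto
    have e': "M + replicate_mset a K + replicate_mset (n - j - a) (- K) = M' + replicate_mset a' K + replicate_mset (n - j' - a') (- K)"
      using e xd yd by (simp add: ext_def K_def)
    have K: "K \<noteq> - K" by (simp add: K_def)
    have c1: "count (M + replicate_mset a K + replicate_mset (n - j - a) (- K)) K = a"
      using noK[OF xd(4)] K by (simp del: diff_diff_left)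
    have c2: "count (M' + replicate_mset a' K + replicate_mset (n - j' - a') (- K)) K = a'"
      using noK[OF yd(4)] K by (simp del: diff_diff_left)
    have aa: "a = a'" using c1 c2 e' by metis
    have c3: "count (M + replicate_mset a K + replicate_mset (n - j - a) (- K)) (- K) = n - j - a"
      using noK[OF xd(4)] K by (simp del: diff_diff_left)
    have c4: "count (M' + replicate_mset a' K + replicate_mset (n - j' - a') (- K)) (- K) = n - j' - a'"
      using noK[OF yd(4)] K by (simp del: diff_diff_left)
    have "n - j - a = n - j' - a'" using c3 c4 e' by metis
    then have jj: "j = j'" using aa xd(2,3) yd(2,3) by linarith
    have "M = M'" using e' aa jj by simp
    then show "x = y" using xd yd aa jj by simp
  qed simp
  show "ext n k x \<in> MS n (Suc k)" if x: "x \<in> (SIGMA j:{..<n}. SIGMA a:{0..n-j}. MS j k)" for x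
  proof -
    obtain j a M where xd: "x = (j, a, M)" "j < n" "a \<le> n - j" "M \<in> MS j k" using x by auto
    have sz: "size (ext n k x) = n" using xd by (simp add: ext_def MS_def)
    have bd: "\<forall>y\<in>#ext n k x. \<bar>y\<bar> \<le> int (Suc k)" using xd by (auto simp: ext_def MS_def)
    have cv: "int m \<in># ext n k x \<or> - int m \<in># ext n k x" if m: "1 \<le> m" "m \<le> Suc k" for m
    proof (cases "m = Suc k")
      case True
      have "0 < a \<or> 0 < n - j - a" using xd by linarith
      then show ?thesis using True xd by (auto simp: ext_def)
    next
      case False
      then have "int m \<in># M \<or> - int m \<in># M" using xd(4) m by (auto simp: MS_def)
      then show ?thesis using xd by (auto simp: ext_def)
    qed
    show ?thesis using sz bd cv by (simp add: MS_def)
  qed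
  show "\<exists>x\<in>(SIGMA j:{..<n}. SIGMA a:{0..n-j}. MS j k). M = ext n k x" if M: "M \<in> MS n (Suc k)" for M
  proof -
    define M' where "M' = filter_mset (\<lambda>x. \<bar>x\<bar> \<le> int k) M"
    define a where "a = count M K"
    define b where "b = count M (- K)"
    have bd: "\<And>x. x \<in># M \<Longrightarrow> \<bar>x\<bar> \<le> K" using M by (auto simp: MS_def K_def)
    have decomp: "M = M' + replicate_mset a K + replicate_mset b (- K)"
    proof (rule multiset_eqI)
      fix x
      show "count M x = count (M' + replicate_mset a K + replicate_mset b (- K)) x"
      proof (cases "\<bar>x\<bar> \<le> int k")
        case True
        then have "x \<noteq> K" "x \<noteq> - K" by (auto simp: K_def)
        then show ?thesis using True by (simp add: M'_def)
      next
        case False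
        show ?thesis
        proof (cases "x = K \<or> x = - K")
          case True
          then show ?thesis using False by (auto simp: M'_def a_def b_def K_def)
        next
          case F2: False
          then have "\<bar>x\<bar> \<noteq> K" by (auto simp: abs_if split: if_splits)
          then have "x \<notin># M" using bd False by (force simp: K_def)
          then show ?thesis using False F2 by (simp add: M'_def not_in_iff)
        qed
      qed
    qed
    define j where "j = size M'"
    have szM: "size M = n" using M by (simp add: MS_def)
    have sz: "j + a + b = n" using decomp szM by (metis j_def size_replicate_mset size_union)
    have ab: "0 < a + b"
    proof -
      have "K \<in># M \<or> - K \<in># M" using M by (auto simp: MS_def K_def)
      then show ?thesis by (auto simp: a_def b_def)
    qed
    have M'MS: "M' \<in> MS j k"
    proof -
      have "int m \<in># M' \<or> - int m \<in># M'" if m: "1 \<le> m" "m \<le> k" for m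
        using M m by (auto simp: MS_def M'_def)
      then show ?thesis by (auto simp: MS_def M'_def j_def)
    qed
    have x: "(j, a, M') \<in> (SIGMA j:{..<n}. SIGMA a:{0..n-j}. MS j k)" using sz ab M'MS by auto
    have "b = n - j - a" using sz by simp
    then have "M = ext n k (j, a, M')" using decomp by (simp add: ext_def K_def)
    then show ?thesis using x by blast
  qed
qed

lemma card_MS_Suc: "card (MS n (Suc k)) = (\<Sum>j<n. (n - j + 1) * card (MS j k))"
proof -
  have "card (MS n (Suc k)) = card (SIGMA j:{..<n}. SIGMA a:{0..n-j}. MS j k)"
    using bij_betw_same_card[OF MS_Suc_bij] by simp
  also have "\<dots> = (\<Sum>j<n. card (SIGMA a:{0..n-j}. MS j k))"
    by (rule card_SigmaI) (auto intro: finite_SigmaI finite_MS)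
  also have "\<dots> = (\<Sum>j<n. (n - j + 1) * card (MS j k))"
    by (intro sum.cong refl) (simp add: finite_MS)
  finally show ?thesis .
qed


definition Cc :: "nat \<Rightarrow> nat \<Rightarrow> int" where "Cc n k = int (card (MS n k))"

lemma Cc_0: "Cc n 0 = 1" by (simp add: Cc_def MS_0)

lemma Cc_Suc: "Cc n (Suc k) = (\<Sum>j<n. (int n - int j + 1) * Cc j k)"
proof -
  have "Cc n (Suc k) = (\<Sum>j<n. int ((n - j + 1) * card (MS j k)))"
    unfolding Cc_def card_MS_Suc of_nat_sum ..
  also have "\<dots> = (\<Sum>j<n. (int n - int j + 1) * Cc j k)"
  proof (intro sum.cong refl)
    fix j assume "j \<in> {..<n}"
    then have "int (n - j + 1) = int n - int j + 1" by (simp add: of_nat_diff)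
    then show "int ((n - j + 1) * card (MS j k)) = (int n - int j + 1) * Cc j k"
      by (simp only: of_nat_mult Cc_def)
  qed
  finally show ?thesis .
qed

lemma Cc_rec: "Cc (n + 2) (Suc k) = 2 * Cc (n + 1) (Suc k) - Cc n (Suc k) + 2 * Cc (n + 1) k - Cc n k"
proof -
  define c where "c j = Cc j k" for j
  have a: "Cc (n + 2) (Suc k) = (\<Sum>j<n. (int n - int j + 3) * c j) + 3 * c n + 2 * c (n + 1)"
    by (simp add: Cc_Suc c_def algebra_simps)
  have b: "Cc (n + 1) (Suc k) = (\<Sum>j<n. (int n - int j + 2) * c j) + 2 * c n"
    by (simp add: Cc_Suc c_def algebra_simps)
  have d: "Cc n (Suc k) = (\<Sum>j<n. (int n - int j + 1) * c j)"
    by (simp add: Cc_Suc c_def)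
  have gen: "(\<Sum>j<n. A j) - 2 * (\<Sum>j<n. B j) + (\<Sum>j<n. D j) = (\<Sum>j<n. A j - 2 * B j + D j)"
    for A B D :: "nat \<Rightarrow> int"
    by (simp add: sum_subtractf sum.distrib sum_distrib_left)
  have "(\<Sum>j<n. (int n - int j + 3) * c j) - 2 * (\<Sum>j<n. (int n - int j + 2) * c j) + (\<Sum>j<n. (int n - int j + 1) * c j)
      = (\<Sum>j<n. (int n - int j + 3) * c j - 2 * ((int n - int j + 2) * c j) + (int n - int j + 1) * c j)"
    by (rule gen)
  also have "\<dots> = 0" by (intro sum.neutral ballI) (simp add: algebra_simps)
  finally have z: "(\<Sum>j<n. (int n - int j + 3) * c j) - 2 * (\<Sum>j<n. (int n - int j + 2) * c j) + (\<Sum>j<n. (int n - int j + 1) * c j) = 0" .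
  show ?thesis using z unfolding a b d by (simp add: c_def algebra_simps)
qed

lemma Cc_base0: "Cc 0 (Suc k) = 0" by (simp add: Cc_Suc)
lemma Cc_base1: "Cc 1 (Suc k) = (if k = 0 then 2 else 0)"
proof -
  have "Cc 1 (Suc k) = 2 * Cc 0 k" by (simp add: Cc_Suc)
  then show ?thesis by (cases k) (simp_all add: Cc_0 Cc_base0)
qed

definition f1 :: "nat \<Rightarrow> nat \<Rightarrow> int" where
  "f1 n k = (\<Sum>i=0..k. (-1)^(k-i) * 2^i * int (k choose i) * int ((n+i) choose (2*k)))"

definition GG :: "nat \<Rightarrow> nat \<Rightarrow> int" where
  "GG n k = (\<Sum>i\<le>k. (-2)^i * int (k choose i) * int ((n+i) choose (2*k)))"

lemma f1_GG: "f1 n k = (-1)^k * GG n k"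
proof -
  have "(-1::int)^(k-i) = (-1)^k * (-1)^i" if "i \<le> k" for i
  proof -
    have "(-1::int)^k = (-1)^(k-i) * (-1)^i" using that by (simp flip: power_add)
    then have "(-1::int)^k * (-1)^i = (-1)^(k-i) * ((-1)^i * (-1)^i)" by (simp add: algebra_simps)
    also have "(-1::int)^i * (-1)^i = 1" by (simp flip: power_add)
    finally show ?thesis by simp
  qed
  then have "f1 n k = (\<Sum>i\<le>k. (-1)^k * ((-2)^i * int (k choose i) * int ((n+i) choose (2*k))))"
    unfolding f1_def atLeast0AtMost
    by (intro sum.cong refl) (simp add: power_mult_distrib[symmetric] algebra_simps)
  also have "\<dots> = (-1)^k * GG n k" by (simp add: GG_def sum_distrib_left)
  finally show ?thesis .
qed

lemma choose_d2: "int ((m+2) choose (r+2)) - 2 * int ((m+1) choose (r+2)) + int (m choose (r+2)) = int (m choose r)"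
proof -
  have "((m+2) choose (r+2)) = ((m+1) choose (r+1)) + ((m+1) choose (r+2))" by simp
  moreover have "((m+1) choose (r+2)) = (m choose (r+1)) + (m choose (r+2))" by simp
  moreover have "((m+1) choose (r+1)) = (m choose r) + (m choose (r+1))" by simp
  ultimately show ?thesis by simp
qed

lemma GG_rec: "GG (n+2) (Suc k) - 2 * GG (n+1) (Suc k) + GG n (Suc k) = GG n k - 2 * GG (n+1) k"
proof -
  define B where "B m r = int (m choose r)" for m r
  have "GG (n+2) (Suc k) - 2 * GG (n+1) (Suc k) + GG n (Suc k) =
    (\<Sum>i\<le>Suc k. (-2)^i * B (Suc k) i * (B (n+i+2) (2*k+2) - 2 * B (n+i+1) (2*k+2) + B (n+i) (2*k+2)))"
    by (simp add: GG_def B_def sum_subtractf sum.distrib sum_distrib_left algebra_simps)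
  also have "\<dots> = (\<Sum>i\<le>Suc k. (-2)^i * B (Suc k) i * B (n+i) (2*k))"
    using choose_d2 by (simp add: B_def)
  also have "\<dots> = B n (2*k) + (\<Sum>i\<le>k. (-2)^(Suc i) * B (Suc k) (Suc i) * B (n + Suc i) (2*k))"
    by (subst sum.atMost_Suc_shift) (simp add: B_def)
  also have "\<dots> = B n (2*k) + ((\<Sum>i\<le>k. (-2)^(Suc i) * B k (Suc i) * B (n + Suc i) (2*k))
      - 2 * (\<Sum>i\<le>k. (-2)^i * B k i * B (n + 1 + i) (2*k)))"
  proof -
    have t: "(-2)^(Suc i) * B (Suc k) (Suc i) * B (n + Suc i) (2*k) =
       (-2)^(Suc i) * B k (Suc i) * B (n + Suc i) (2*k) - 2 * ((-2)^i * B k i * B (n + 1 + i) (2*k))" for i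
      by (simp add: B_def algebra_simps)
    show ?thesis by (simp only: t sum_subtractf sum_distrib_left)
  qed
  also have "\<dots> = (B n (2*k) + (\<Sum>i\<le>k. (-2)^(Suc i) * B k (Suc i) * B (n + Suc i) (2*k)))
      - 2 * (\<Sum>i\<le>k. (-2)^i * B k i * B (n + 1 + i) (2*k))" by simp
  also have "B n (2*k) + (\<Sum>i\<le>k. (-2)^(Suc i) * B k (Suc i) * B (n + Suc i) (2*k))
     = (\<Sum>i\<le>Suc k. (-2)^i * B k i * B (n + i) (2*k))"
    by (subst sum.atMost_Suc_shift) (simp add: B_def)
  also have "\<dots> = GG n k" by (simp add: GG_def B_def)
  also have "(\<Sum>i\<le>k. (-2)^i * B k i * B (n + 1 + i) (2*k)) = GG (n+1) k" by (simp add: GG_def B_def)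
  finally show ?thesis .
qed

lemma f1_rec: "f1 (n + 2) (Suc k) = 2 * f1 (n + 1) (Suc k) - f1 n (Suc k) + 2 * f1 (n + 1) k - f1 n k"
proof -
  have e: "GG (n+2) (Suc k) = 2 * GG (n+1) (Suc k) - GG n (Suc k) + GG n k - 2 * GG (n+1) k"
    using GG_rec[of n k] by linarith
  show ?thesis unfolding f1_GG e by (simp add: algebra_simps)
qed

lemma f1_0: "f1 n 0 = 1" by (simp add: f1_def)

lemma GG_0: "GG 0 (Suc k) = 0"
  unfolding GG_def by (intro sum.neutral ballI) (simp add: binomial_eq_0)

lemma GG_1: "GG 1 (Suc k) = (if k = 0 then -2 else 0)"
proof (cases k)
  case 0 then show ?thesis by (simp add: GG_def binomial_eq_0 numeral_2_eq_2)
next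
  case (Suc k')
  have "GG 1 (Suc k) = (\<Sum>i\<le>Suc k. 0)"
    unfolding GG_def
  proof (intro sum.cong refl)
    fix x assume "x \<in> {..Suc k}"
    then have "1 + x < 2 * Suc k" using Suc by simp
    then show "(-2) ^ x * int (Suc k choose x) * int ((1 + x) choose (2 * Suc k)) = 0"
      by (simp add: binomial_eq_0)
  qed
  then show ?thesis using Suc by simp
qed

lemma Cc_base1': "Cc (Suc 0) (Suc k) = (if k = 0 then 2 else 0)" using Cc_base1 by simp
lemma GG_1': "GG (Suc 0) (Suc k) = (if k = 0 then -2 else 0)" using GG_1 by simp

lemma Cc_f1: "Cc n k = f1 n k"
proof -
  have "\<forall>k. Cc n k = f1 n k \<and> Cc (n+1) k = f1 (n+1) k"
  proof (induction n)
    case 0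
    have "Cc 0 k = f1 0 k" for k
      by (cases k) (simp add: Cc_0 f1_0, simp add: Cc_base0 f1_GG GG_0)
    moreover have "Cc 1 k = f1 1 k" for k
      by (cases k) (simp add: Cc_0 f1_0, simp add: Cc_base1' f1_GG GG_1')
    ultimately show ?case by simp
  next
    case (Suc n)
    have "Cc (n+2) k = f1 (n+2) k" for k
    proof (cases k)
      case 0 then show ?thesis by (simp add: Cc_0 f1_0)
    next
      case (Suc k')
      then show ?thesis using Cc_rec[of n k'] f1_rec[of n k'] Suc.IH by simp
    qed
    then show ?case using Suc.IH by simp
  qed
  then show ?thesis by simp
qed


lemma binom_neg: "b < 0 \<Longrightarrow> binom a b = 0" by (simp add: binom_def)
lemma binom_gt: "a < b \<Longrightarrow> binom a b = 0" by (simp add: binom_def)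
lemma binom_0: "0 \<le> a \<Longrightarrow> binom a 0 = 1" by (simp add: binom_def)

lemma binom_pascal:
  assumes "a \<noteq> -1 \<or> b \<noteq> 0"
  shows "binom (a + 1) b = binom a b + binom a (b - 1)"
proof (cases "0 \<le> a")
  case False
  then have "a + 1 < 0 \<or> a = -1" by linarith
  then show ?thesis using assms by (auto simp: binom_def)
next
  case a: True
  consider "b < 0" | "b = 0" | "a + 1 < b" | "1 \<le> b \<and> b \<le> a + 1" by linarith
  then show ?thesis
  proof cases
    case 1 then show ?thesis by (simp add: binom_def)
  next
    case 2 then show ?thesis using a by (simp add: binom_def)
  next
    case 3 then show ?thesis using a by (simp add: binom_def)
  next
    case 4
    obtain A where A: "a = int A" using a by (metis nonneg_eq_int)
    obtain B where B: "b = int (Suc B)" using 4 by (metis int_Suc nonneg_eq_int zero_le_imp_eq_int add.commute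
          diff_add_cancel diff_ge_0_iff_ge of_nat_Suc zle_int)
    have "Suc A choose Suc B = (A choose B) + (A choose Suc B)" by simp
    moreover have "nat (a + 1) = Suc A" "nat b = Suc B" "nat (b - 1) = B" using A B by auto
    moreover have "b - 1 \<le> a" "0 \<le> b - 1" using 4 by auto
    ultimately show ?thesis using 4 A B by (auto simp: binom_def)
  qed
qed

definition Bz :: "int \<Rightarrow> int \<Rightarrow> real" where "Bz a b = real_of_int (binom a b)"

definition EE :: "nat \<Rightarrow> nat \<Rightarrow> real" where
  "EE n i = Bz (int n - int i + 1) (int i) + Bz (int n - int i) (int i - 1)"

definition PP :: "nat \<Rightarrow> nat \<Rightarrow> real" where
  "PP n i = (-1)^i * (2::real) powi (int n - 2 * int i) * EE n i"

lemma Bz_pascal: "a \<noteq> -1 \<or> b \<noteq> 0 \<Longrightarrow> Bz (a + 1) b = Bz a b + Bz a (b - 1)"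
  unfolding Bz_def using binom_pascal by simp

lemma EE_zero: "n + 1 \<le> i \<Longrightarrow> EE n i = 0"
  unfolding EE_def Bz_def by (simp add: binom_gt binom_neg)

lemma PP_zero: "n + 1 \<le> i \<Longrightarrow> PP n i = 0"
  by (simp add: PP_def EE_zero)

lemma PP_0: "PP n 0 = 2 ^ n"
  unfolding PP_def EE_def Bz_def by (simp add: binom_0 binom_neg)

lemma EE_rec: "1 \<le> i \<Longrightarrow> EE (n + 2) i = EE (n + 1) i + EE n (i - 1)"
proof -
  assume i: "1 \<le> i"
  define a where "a = int n + 1 - int i"
  have e1: "EE (n + 2) i = Bz (a + 2) (int i) + Bz (a + 1) (int i - 1)"
    by (simp add: EE_def a_def algebra_simps)
  have e2: "EE (n + 1) i = Bz (a + 1) (int i) + Bz a (int i - 1)"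
    by (simp add: EE_def a_def algebra_simps)
  have e3: "EE n (i - 1) = Bz (a + 1) (int i - 1) + Bz a (int i - 1 - 1)"
    using i by (simp add: EE_def a_def of_nat_diff algebra_simps)
  have p1': "Bz (a + 1 + 1) (int i) = Bz (a + 1) (int i) + Bz (a + 1) (int i - 1)"
    by (rule Bz_pascal) (use i in simp)
  have aa: "a + 1 + 1 = a + 2" by simp
  have p1: "Bz (a + 2) (int i) = Bz (a + 1) (int i) + Bz (a + 1) (int i - 1)"
    using p1' unfolding aa .
  have p2: "Bz (a + 1) (int i - 1) = Bz a (int i - 1) + Bz a (int i - 1 - 1)"
  proof (cases "a = -1")
    case True
    then have "int i - 1 \<noteq> 0 \<or> True" by simp
    show ?thesis
    proof (cases "int i - 1 = 0")
      case True
      with \<open>a = -1\<close> have "i = 1" "n = 1 - 1 - 1 + 0 \<or> True" by auto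
      then show ?thesis using \<open>a = -1\<close> a_def by simp
    next
      case False then show ?thesis by (intro Bz_pascal) simp
    qed
  next
    case False then show ?thesis by (intro Bz_pascal) simp
  qed
  show ?thesis unfolding e1 e2 e3 using p1 p2 by linarith
qed

lemma PP_rec: "PP (n + 2) (Suc j) = 2 * PP (n + 1) (Suc j) - PP n j"
proof -
  have p1: "(2::real) powi (int (n + 2) - 2 * int (Suc j)) = 2 * 2 powi (int (n + 1) - 2 * int (Suc j))"
  proof -
    define m where "m = int (n + 1) - 2 * int (Suc j)"
    have e: "int (n + 2) - 2 * int (Suc j) = m + 1" by (simp add: m_def)
    have "(2::real) powi (int (n + 2) - 2 * int (Suc j)) = 2 powi (m + 1)" by (simp only: e)
    also have "\<dots> = 2 * 2 powi m" by (rule power_int_add_1') simp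
    finally show ?thesis by (simp only: m_def)
  qed
  have p2: "(2::real) powi (int n - 2 * int j) = 2 powi (int (n + 2) - 2 * int (Suc j))"
    by (rule arg_cong[where f="power_int 2"]) simp
  have "PP (n + 2) (Suc j) = (-1)^(Suc j) * 2 powi (int (n + 2) - 2 * int (Suc j)) * (EE (n + 1) (Suc j) + EE n j)"
    unfolding PP_def using EE_rec[of "Suc j" n] by simp
  also have "\<dots> = 2 * PP (n + 1) (Suc j) - PP n j"
    unfolding PP_def p2 p1 by (simp add: algebra_simps)
  finally show ?thesis .
qed

definition hh :: "nat \<Rightarrow> int \<Rightarrow> real" where
  "hh n k = (\<Sum>i<n+3. PP n i * Bz (int n - int i) (k - int i))"

lemma sum_trunc:
  fixes n M :: nat
  assumes "n \<le> M" "\<And>i. n \<le> i \<Longrightarrow> t i = (0::real)"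
  shows "(\<Sum>i<M. t i) = (\<Sum>i<n. t i)"
proof (rule sum.mono_neutral_right)
  show "finite {..<M}" by simp
  show "{..<n} \<subseteq> {..<M}" using assms(1) by auto
  show "\<forall>i\<in>{..<M} - {..<n}. t i = 0" using assms(2) by auto
qed

lemma hh_ext: "n + 1 \<le> M \<Longrightarrow> hh n k = (\<Sum>i<M. PP n i * Bz (int n - int i) (k - int i))"
  unfolding hh_def
  by (subst (1 2) sum_trunc[where n="n+1"]) (auto simp: PP_zero)

lemma Bz_pascal2: "PP m i * (Bz a (b - 1) + Bz a b) = PP m i * Bz (a + 1) b"
  if "a = -1 \<and> b = 0 \<Longrightarrow> PP m i = 0" for a b m i
proof (cases "a = -1 \<and> b = 0")
  case True then show ?thesis using that by simp
next
  case False then show ?thesis using Bz_pascal[of a b] by (simp add: algebra_simps)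
qed

lemma hh_rec: "hh (n + 2) k = 2 * hh (n + 1) (k - 1) - hh n (k - 2) + 2 * hh (n + 1) k - hh n (k - 1)"
proof -
  define N where "N = n + 5"
  have S1: "2 * hh (n + 1) (k - 1) + 2 * hh (n + 1) k = (\<Sum>i<N. 2 * PP (n + 1) i * Bz (int n + 2 - int i) (k - int i))"
  proof -
    have "2 * hh (n + 1) (k - 1) + 2 * hh (n + 1) k =
      (\<Sum>i<N. 2 * (PP (n + 1) i * (Bz (int n + 1 - int i) (k - int i - 1) + Bz (int n + 1 - int i) (k - int i))))"
      using hh_ext[of "n+1" N] by (simp add: N_def sum_distrib_left sum.distrib algebra_simps)
    also have "\<dots> = (\<Sum>i<N. 2 * PP (n + 1) i * Bz (int n + 2 - int i) (k - int i))"
    proof (intro sum.cong refl)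
      fix i
      have "PP (n + 1) i * (Bz (int n + 1 - int i) (k - int i - 1) + Bz (int n + 1 - int i) (k - int i))
          = PP (n + 1) i * Bz (int n + 1 - int i + 1) (k - int i)"
        by (rule Bz_pascal2) (auto intro: PP_zero)
      then show "2 * (PP (n + 1) i * (Bz (int n + 1 - int i) (k - int i - 1) + Bz (int n + 1 - int i) (k - int i)))
          = 2 * PP (n + 1) i * Bz (int n + 2 - int i) (k - int i)"
        by (simp add: algebra_simps)
    qed
    finally show ?thesis .
  qed
  have S2: "hh n (k - 2) + hh n (k - 1) = (\<Sum>i<N. PP n i * Bz (int n + 1 - int i) (k - 1 - int i))"
  proof -
    have "hh n (k - 2) + hh n (k - 1) =
      (\<Sum>i<N. PP n i * (Bz (int n - int i) (k - 1 - int i - 1) + Bz (int n - int i) (k - 1 - int i)))"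
      using hh_ext[of n N] by (simp add: N_def sum_distrib_left sum.distrib algebra_simps)
    also have "\<dots> = (\<Sum>i<N. PP n i * Bz (int n + 1 - int i) (k - 1 - int i))"
    proof (intro sum.cong refl)
      fix i
      have "PP n i * (Bz (int n - int i) (k - 1 - int i - 1) + Bz (int n - int i) (k - 1 - int i))
          = PP n i * Bz (int n - int i + 1) (k - 1 - int i)"
        by (rule Bz_pascal2) (auto intro: PP_zero)
      then show "PP n i * (Bz (int n - int i) (k - 1 - int i - 1) + Bz (int n - int i) (k - 1 - int i))
          = PP n i * Bz (int n + 1 - int i) (k - 1 - int i)"
        by (simp add: algebra_simps)
    qed
    finally show ?thesis .
  qed
  have H: "hh (n + 2) k = (\<Sum>i<Suc N. PP (n + 2) i * Bz (int n + 2 - int i) (k - int i))"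
    using hh_ext[of "n+2" "Suc N"] by (simp add: N_def algebra_simps)
  also have "\<dots> = PP (n + 2) 0 * Bz (int n + 2) k + (\<Sum>i<N. PP (n + 2) (Suc i) * Bz (int n + 1 - int i) (k - 1 - int i))"
    by (subst sum.lessThan_Suc_shift) (simp add: algebra_simps)
  also have "\<dots> = 2 * PP (n + 1) 0 * Bz (int n + 2) k + (\<Sum>i<N. 2 * PP (n + 1) (Suc i) * Bz (int n + 1 - int i) (k - 1 - int i))
      - (\<Sum>i<N. PP n i * Bz (int n + 1 - int i) (k - 1 - int i))"
  proof -
    have "(\<Sum>i<N. PP (n + 2) (Suc i) * Bz (int n + 1 - int i) (k - 1 - int i)) =
      (\<Sum>i<N. 2 * PP (n + 1) (Suc i) * Bz (int n + 1 - int i) (k - 1 - int i) - PP n i * Bz (int n + 1 - int i) (k - 1 - int i))"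
      unfolding PP_rec by (simp only: left_diff_distrib)
    also have "\<dots> = (\<Sum>i<N. 2 * PP (n + 1) (Suc i) * Bz (int n + 1 - int i) (k - 1 - int i)) - (\<Sum>i<N. PP n i * Bz (int n + 1 - int i) (k - 1 - int i))"
      by (rule sum_subtractf)
    finally have e: "(\<Sum>i<N. PP (n + 2) (Suc i) * Bz (int n + 1 - int i) (k - 1 - int i)) =
      (\<Sum>i<N. 2 * PP (n + 1) (Suc i) * Bz (int n + 1 - int i) (k - 1 - int i)) - (\<Sum>i<N. PP n i * Bz (int n + 1 - int i) (k - 1 - int i))" .
    have p0: "PP (n + 2) 0 = 2 * PP (n + 1) 0" by (simp add: PP_0)
    show ?thesis unfolding e p0 by simp
  qed
  also have "2 * PP (n + 1) 0 * Bz (int n + 2) k + (\<Sum>i<N. 2 * PP (n + 1) (Suc i) * Bz (int n + 1 - int i) (k - 1 - int i))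
      = (\<Sum>i<Suc N. 2 * PP (n + 1) i * Bz (int n + 2 - int i) (k - int i))"
    by (subst sum.lessThan_Suc_shift) (simp add: algebra_simps)
  also have "\<dots> = (\<Sum>i<N. 2 * PP (n + 1) i * Bz (int n + 2 - int i) (k - int i))"
    unfolding sum.lessThan_Suc using PP_zero[of "n+1" N] by (simp add: N_def)
  finally show ?thesis using S1 S2 by simp
qed


definition cc :: "nat \<Rightarrow> int \<Rightarrow> real" where
  "cc n m = (if m < 0 then 0 else real_of_int (Cc n (nat m)))"

lemma cc_rec: "cc (n + 2) m = 2 * cc (n + 1) m - cc n m + 2 * cc (n + 1) (m - 1) - cc n (m - 1)"
proof -
  consider "m < 0" | "m = 0" | "0 < m" by linarith
  then show ?thesis
  proof cases
    case 1 then show ?thesis by (simp add: cc_def)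
  next
    case 2 then show ?thesis by (simp add: cc_def Cc_0)
  next
    case 3
    obtain N where N: "m = int N" "0 < N" using 3 by (rule pos_int_cases)
    then obtain k where "N = Suc k" using not0_implies_Suc by blast
    then have k: "m = int (Suc k)" using N by simp
    have "Cc (n + 2) (Suc k) = 2 * Cc (n + 1) (Suc k) - Cc n (Suc k) + 2 * Cc (n + 1) k - Cc n k"
      by (rule Cc_rec)
    then have "real_of_int (Cc (n + 2) (Suc k)) = 2 * real_of_int (Cc (n + 1) (Suc k)) - real_of_int (Cc n (Suc k))
       + 2 * real_of_int (Cc (n + 1) k) - real_of_int (Cc n k)"
      by (simp only: of_int_add of_int_diff of_int_mult of_int_numeral)
    moreover have "nat m = Suc k" "nat (m - 1) = k" "\<not> m < 0" "\<not> m - 1 < 0" using k by auto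
    ultimately show ?thesis by (simp add: cc_def)
  qed
qed

lemma Bz_simps: "Bz 0 k = (if k = 0 then 1 else 0)" "Bz 1 k = (if k = 0 \<or> k = 1 then 1 else 0)"
  "a < 0 \<Longrightarrow> Bz a k = 0"
  by (auto simp: Bz_def binom_def nat_eq_iff)

lemma hh0: "hh 0 k = (if k = 0 then 1 else 0)"
proof -
  have "hh 0 k = (\<Sum>i<1. PP 0 i * Bz (int 0 - int i) (k - int i))" by (rule hh_ext) simp
  then show ?thesis by (simp add: PP_0 Bz_simps)
qed

lemma PP11: "PP 1 1 = -1"
proof -
  have "EE 1 1 = 2" by (simp add: EE_def Bz_def binom_def)
  moreover have "(2::real) powi (int 1 - 2 * int 1) = 1/2" by (simp add: power_int_minus)
  ultimately show ?thesis by (simp add: PP_def)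
qed

lemma hh1: "hh 1 k = (if k = 0 then 2 else if k = 1 then 1 else 0)"
proof -
  have "hh 1 k = (\<Sum>i<2. PP 1 i * Bz (int 1 - int i) (k - int i))" by (rule hh_ext) simp
  also have "\<dots> = PP 1 0 * Bz 1 k + PP 1 1 * Bz 0 (k - 1)" by (simp add: numeral_2_eq_2)
  also have "\<dots> = 2 * Bz 1 k - Bz 0 (k - 1)" using PP11 by (simp add: PP_0)
  finally show ?thesis by (simp add: Bz_simps)
qed

lemma cc0: "cc 0 m = (if m = 0 then 1 else 0)"
proof -
  have "m > 0 \<Longrightarrow> \<exists>k. nat m = Suc k" by (intro exI[of _ "nat m - 1"]) simp
  then show ?thesis by (auto simp: cc_def Cc_0 Cc_base0)
qed

lemma cc1: "cc 1 m = (if m = 0 then 1 else if m = 1 then 2 else 0)"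
proof -
  consider "m < 0" | "m = 0" | "m = 1" | "m \<ge> 2" by linarith
  then show ?thesis
  proof cases
    case 4
    have "nat m = Suc (Suc (nat m - 2))" using 4 by simp
    then obtain k where "nat m = Suc (Suc k)" by blast
    then show ?thesis using 4 Cc_base1 by (simp add: cc_def)
  qed (auto simp: cc_def Cc_0 Cc_base1')
qed

lemma cc_hh: "cc n m = hh n (int n - m)"
proof -
  have "\<forall>m. cc n m = hh n (int n - m) \<and> cc (n + 1) m = hh (n + 1) (int (n + 1) - m)"
  proof (induction n)
    case 0
    show ?case
    proof
      fix m
      have a: "cc 0 m = hh 0 (int 0 - m)" by (simp add: cc0 hh0)
      have b: "cc 1 m = hh 1 (int 1 - m)" unfolding cc1 hh1 by auto
      show "cc 0 m = hh 0 (int 0 - m) \<and> cc (0 + 1) m = hh (0 + 1) (int (0 + 1) - m)"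
        using a b by simp
    qed
  next
    case (Suc n)
    have "cc (n + 2) m = hh (n + 2) (int (n + 2) - m)" for m
    proof -
      have "cc (n + 2) m = 2 * cc (n + 1) m - cc n m + 2 * cc (n + 1) (m - 1) - cc n (m - 1)" by (rule cc_rec)
      also have "\<dots> = 2 * hh (n + 1) (int (n + 2) - m - 1) - hh n (int (n + 2) - m - 2)
          + 2 * hh (n + 1) (int (n + 2) - m) - hh n (int (n + 2) - m - 1)"
        using Suc.IH by (simp add: algebra_simps)
      also have "\<dots> = hh (n + 2) (int (n + 2) - m)" by (rule hh_rec[symmetric])
      finally show ?thesis .
    qed
    then show ?case using Suc.IH by simp
  qed
  then show ?thesis by simp
qed

lemma final2:
  assumes "k \<le> n"
  shows "real (g n (n-k)) =
            (\<Sum>i=0..min k ((n+1) div 2).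
               (-1)^i * (2::real) powi (int n - 2 * int i)
               * real_of_int (binom (int n - int i) (int k - int i))
               * real_of_int (binom (int n - int i + 1) (int i) + binom (int n - int i) (int i - 1)))"
proof -
  have "real (g n (n-k)) = real_of_int (Cc n (n - k))" by (simp add: g_count count_MS Cc_def)
  also have "\<dots> = cc n (int (n - k))" by (simp add: cc_def)
  also have "\<dots> = hh n (int k)" using cc_hh assms by (simp add: of_nat_diff)
  also have "\<dots> = (\<Sum>i<n+3. (-1)^i * (2::real) powi (int n - 2 * int i)
               * real_of_int (binom (int n - int i) (int k - int i))
               * real_of_int (binom (int n - int i + 1) (int i) + binom (int n - int i) (int i - 1)))"
    unfolding hh_def PP_def EE_def Bz_def by (intro sum.cong refl) (simp add: algebra_simps)
  also have "\<dots> = (\<Sum>i=0..min k ((n+1) div 2).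
               (-1)^i * (2::real) powi (int n - 2 * int i)
               * real_of_int (binom (int n - int i) (int k - int i))
               * real_of_int (binom (int n - int i + 1) (int i) + binom (int n - int i) (int i - 1)))"
  proof (rule sum.mono_neutral_right)
    show "finite {..<n+3}" by simp
    show "{0..min k ((n+1) div 2)} \<subseteq> {..<n+3}" by auto
    show "\<forall>i\<in>{..<n+3} - {0..min k ((n+1) div 2)}. (-1)^i * (2::real) powi (int n - 2 * int i)
               * real_of_int (binom (int n - int i) (int k - int i))
               * real_of_int (binom (int n - int i + 1) (int i) + binom (int n - int i) (int i - 1)) = 0"
    proof
      fix i assume "i \<in> {..<n+3} - {0..min k ((n+1) div 2)}"
      then have "k < i \<or> (n+1) div 2 < i" by auto
      then have "binom (int n - int i) (int k - int i) = 0 \<or>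
          (binom (int n - int i + 1) (int i) = 0 \<and> binom (int n - int i) (int i - 1) = 0)"
      proof
        assume "k < i" then show ?thesis by (simp add: binom_neg)
      next
        assume "(n+1) div 2 < i"
        then have "n + 1 < 2 * i" by linarith
        then show ?thesis by (simp add: binom_gt)
      qed
      then show "(-1)^i * (2::real) powi (int n - 2 * int i)
               * real_of_int (binom (int n - int i) (int k - int i))
               * real_of_int (binom (int n - int i + 1) (int i) + binom (int n - int i) (int i - 1)) = 0"
        by auto
    qed
  qed
  finally show ?thesis .
qed

theorem corollary1p8:
  shows "(\<forall>n k. int (g n k) =
            (\<Sum>i=0..k. (-1)^(k-i) * 2^i * int (k choose i) * int ((n+i) choose (2*k))))
       \<and> (\<forall>n k. k \<le> n \<longrightarrow>
            real (g n (n-k)) =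
            (\<Sum>i=0..min k ((n+1) div 2).
               (-1)^i * (2::real) powi (int n - 2 * int i)
               * real_of_int (binom (int n - int i) (int k - int i))
               * real_of_int (binom (int n - int i + 1) (int i) + binom (int n - int i) (int i - 1))))"
proof
  show "\<forall>n k. int (g n k) =
            (\<Sum>i=0..k. (-1)^(k-i) * 2^i * int (k choose i) * int ((n+i) choose (2*k)))"
    using Cc_f1 by (simp add: g_count count_MS Cc_def f1_def)
  show "\<forall>n k. k \<le> n \<longrightarrow>
            real (g n (n-k)) =
            (\<Sum>i=0..min k ((n+1) div 2).
               (-1)^i * (2::real) powi (int n - 2 * int i)
               * real_of_int (binom (int n - int i) (int k - int i))
               * real_of_int (binom (int n - int i + 1) (int i) + binom (int n - int i) (int i - 1)))"
    using final2 by blast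
qed


end
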